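(* Let $\Lambda$ be an Artin algebra, $\omega$ a $\Lambda$-module, and $M=M_1\oplus M_2$ a $\Lambda$-module. Then $\mathrm{l.app}_\omega M_1\ge\mathrm{l.app}_\omega M$.
   Context: All modules are finitely generated left modules. $\mathrm{add}\,\omega$ is the class of direct summands of finite direct sums of copies of $\omega$; a map $f:Z\to\omega_0$ with $\omega_0\in\mathrm{add}\,\omega$ is a left $\mathrm{add}\,\omega$-approximation if every map from $Z$ to a module in $\mathrm{add}\,\omega$ factors through $f$. For a module $Z$, $\mathrm{l.app}_\omega Z$ is the largest positive integer $m$ (or $\infty$) such that a complex $0\to Z\xrightarrow{f_1}\omega_1\xrightarrow{f_2}\omega_2\to\cdots$ with $\omega_i\in\mathrm{add}\,\omega$ and each $\mathrm{Im} f_i\hookrightarrow\omega_i$ a left $\mathrm{add}\,\omega$-approximation of $\mathrm{Im} f_i$ is exact up to $\omega_m$ (resp. everywhere). *)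

theory Defs
  imports "HOL-Algebra.Algebra" "HOL-Library.Extended_Nat"
begin

definition artinian_cring :: "'r ring \<Rightarrow> bool" where
  "artinian_cring R \<longleftrightarrow> cring R \<and>
     (\<forall>I :: nat \<Rightarrow> 'r set. (\<forall>n. ideal (I n) R \<and> I (Suc n) \<subseteq> I n)
        \<longrightarrow> (\<exists>N. \<forall>n\<ge>N. I n = I N))"

definition artin_algebra :: "'r ring \<Rightarrow> 'a ring \<Rightarrow> ('r \<Rightarrow> 'a) \<Rightarrow> bool" where
  "artin_algebra R L phi \<longleftrightarrow> artinian_cring R \<and> ring L \<and> phi \<in> ring_hom R L \<and>
     (\<forall>r\<in>carrier R. \<forall>x\<in>carrier L. phi r \<otimes>\<^bsub>L\<^esub> x = x \<otimes>\<^bsub>L\<^esub> phi r) \<and>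
     (\<exists>S. finite S \<and> S \<subseteq> carrier L \<and>
        (\<forall>x\<in>carrier L. \<exists>c \<in> S \<rightarrow> carrier R.
            x = finsum L (\<lambda>s. phi (c s) \<otimes>\<^bsub>L\<^esub> s) S))"

definition left_module :: "'a ring \<Rightarrow> ('a, 'm) module \<Rightarrow> bool" where
  "left_module L M \<longleftrightarrow> ring L \<and> abelian_group M \<and> module_axioms L M"

definition fin_gen :: "'a ring \<Rightarrow> ('a, 'm) module \<Rightarrow> bool" where
  "fin_gen L M \<longleftrightarrow> (\<exists>S. finite S \<and> S \<subseteq> carrier M \<and>
     (\<forall>x\<in>carrier M. \<exists>c \<in> S \<rightarrow> carrier L. x = finsum M (\<lambda>s. c s \<odot>\<^bsub>M\<^esub> s) S))"

definition left_submodule :: "'a ring \<Rightarrow> ('a, 'm) module \<Rightarrow> 'm set \<Rightarrow> bool" where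
  "left_submodule L M N \<longleftrightarrow> N \<subseteq> carrier M \<and> \<zero>\<^bsub>M\<^esub> \<in> N \<and>
     (\<forall>x\<in>N. \<forall>y\<in>N. x \<oplus>\<^bsub>M\<^esub> y \<in> N) \<and> (\<forall>x\<in>N. \<ominus>\<^bsub>M\<^esub> x \<in> N) \<and>
     (\<forall>r\<in>carrier L. \<forall>x\<in>N. r \<odot>\<^bsub>M\<^esub> x \<in> N)"

definition lhom :: "'a ring \<Rightarrow> ('a, 'm) module \<Rightarrow> ('a, 'n) module \<Rightarrow> ('m \<Rightarrow> 'n) \<Rightarrow> bool" where
  "lhom L M N f \<longleftrightarrow> f \<in> carrier M \<rightarrow> carrier N \<and>
     (\<forall>x\<in>carrier M. \<forall>y\<in>carrier M. f (x \<oplus>\<^bsub>M\<^esub> y) = f x \<oplus>\<^bsub>N\<^esub> f y) \<and>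
     (\<forall>r\<in>carrier L. \<forall>x\<in>carrier M. f (r \<odot>\<^bsub>M\<^esub> x) = r \<odot>\<^bsub>N\<^esub> f x)"

text \<open>Y is in add omega iff Y is a direct summand of omega^n for some n, i.e. there are
  maps s = (s_i) : Y -> omega^n and p = (p_i) : omega^n -> Y with p o s = id.\<close>
definition in_add :: "'a ring \<Rightarrow> ('a, 'w) module \<Rightarrow> ('a, 'u) module \<Rightarrow> bool" where
  "in_add L W Y \<longleftrightarrow> left_module L Y \<and>
     (\<exists>(n::nat) sc pr. (\<forall>i<n. lhom L Y W (sc i) \<and> lhom L W Y (pr i)) \<and>
        (\<forall>x\<in>carrier Y. x = finsum Y (\<lambda>i. pr i (sc i x)) {i. i < n}))"

text \<open>Modules in add omega are represented (up to isomorphism, which suffices) with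
  carrier in the universe type nat => w (submodules of omega^n embed there).\<close>
type_synonym ('a, 'w) umod = "('a, nat \<Rightarrow> 'w) module"

definition left_approx :: "'a ring \<Rightarrow> ('a, 'w) module \<Rightarrow> ('a, 'm) module
    \<Rightarrow> ('a, 'w) umod \<Rightarrow> ('m \<Rightarrow> (nat \<Rightarrow> 'w)) \<Rightarrow> bool" where
  "left_approx L W Z W0 f \<longleftrightarrow> in_add L W W0 \<and> lhom L Z W0 f \<and>
     (\<forall>Y :: ('a, 'w) umod. \<forall>g. in_add L W Y \<and> lhom L Z Y g \<longrightarrow>
        (\<exists>h. lhom L W0 Y h \<and> (\<forall>z\<in>carrier Z. g z = h (f z))))"

text \<open>Complex  0 -> Z --f1--> W 1 --g 1--> W 2 --g 2--> W 3 -> ...,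
  all W i in add omega, with each image inclusion Im -> W i a left approximation.\<close>
definition app_complex :: "'a ring \<Rightarrow> ('a, 'w) module \<Rightarrow> ('a, 'm) module
    \<Rightarrow> ('m \<Rightarrow> (nat \<Rightarrow> 'w)) \<Rightarrow> (nat \<Rightarrow> ('a, 'w) umod) \<Rightarrow> (nat \<Rightarrow> (nat \<Rightarrow> 'w) \<Rightarrow> (nat \<Rightarrow> 'w)) \<Rightarrow> bool" where
  "app_complex L W Z f1 Ws g \<longleftrightarrow>
     lhom L Z (Ws 1) f1 \<and> (\<forall>i\<ge>1. in_add L W (Ws i)) \<and>
     (\<forall>i\<ge>1. lhom L (Ws i) (Ws (Suc i)) (g i)) \<and>
     (\<forall>z\<in>carrier Z. g 1 (f1 z) = \<zero>\<^bsub>Ws 2\<^esub>) \<and>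
     (\<forall>i\<ge>1. \<forall>x\<in>carrier (Ws i). g (Suc i) (g i x) = \<zero>\<^bsub>Ws (Suc (Suc i))\<^esub>) \<and>
     left_approx L W ((Ws 1)\<lparr>carrier := f1 ` carrier Z\<rparr>) (Ws 1) id \<and>
     (\<forall>i\<ge>1. left_approx L W ((Ws (Suc i))\<lparr>carrier := g i ` carrier (Ws i)\<rparr>) (Ws (Suc i)) id)"

definition in_image :: "('a, 'm) module \<Rightarrow> ('m \<Rightarrow> (nat \<Rightarrow> 'w)) \<Rightarrow> (nat \<Rightarrow> ('a, 'w) umod)
    \<Rightarrow> (nat \<Rightarrow> (nat \<Rightarrow> 'w) \<Rightarrow> (nat \<Rightarrow> 'w)) \<Rightarrow> nat \<Rightarrow> (nat \<Rightarrow> 'w) set" where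
  "in_image Z f1 Ws g i = (if i = 1 then f1 ` carrier Z else g (i - 1) ` carrier (Ws (i - 1)))"

definition exact_at :: "('a, 'm) module \<Rightarrow> ('m \<Rightarrow> (nat \<Rightarrow> 'w)) \<Rightarrow> (nat \<Rightarrow> ('a, 'w) umod)
    \<Rightarrow> (nat \<Rightarrow> (nat \<Rightarrow> 'w) \<Rightarrow> (nat \<Rightarrow> 'w)) \<Rightarrow> nat \<Rightarrow> bool" where
  "exact_at Z f1 Ws g i \<longleftrightarrow>
     {x \<in> carrier (Ws i). g i x = \<zero>\<^bsub>Ws (Suc i)\<^esub>} = in_image Z f1 Ws g i"

text \<open>0 -> Z -> W 1 -> ... -> W m is exact: exact at Z and at W 1, ..., W (m-1).\<close>
definition exact_upto :: "('a, 'm) module \<Rightarrow> ('m \<Rightarrow> (nat \<Rightarrow> 'w)) \<Rightarrow> (nat \<Rightarrow> ('a, 'w) umod)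
    \<Rightarrow> (nat \<Rightarrow> (nat \<Rightarrow> 'w) \<Rightarrow> (nat \<Rightarrow> 'w)) \<Rightarrow> nat \<Rightarrow> bool" where
  "exact_upto Z f1 Ws g m \<longleftrightarrow> inj_on f1 (carrier Z) \<and>
     (\<forall>i. 1 \<le> i \<and> i < m \<longrightarrow> exact_at Z f1 Ws g i)"

definition exact_everywhere :: "('a, 'm) module \<Rightarrow> ('m \<Rightarrow> (nat \<Rightarrow> 'w)) \<Rightarrow> (nat \<Rightarrow> ('a, 'w) umod)
    \<Rightarrow> (nat \<Rightarrow> (nat \<Rightarrow> 'w) \<Rightarrow> (nat \<Rightarrow> 'w)) \<Rightarrow> bool" where
  "exact_everywhere Z f1 Ws g \<longleftrightarrow> inj_on f1 (carrier Z) \<and> (\<forall>i\<ge>1. exact_at Z f1 Ws g i)"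

text \<open>l.app: infinity if some such complex is exact everywhere, otherwise the largest
  positive m for which some such complex is exact up to W m (0 if there is none).\<close>
definition lapp :: "'a ring \<Rightarrow> ('a, 'w) module \<Rightarrow> ('a, 'm) module \<Rightarrow> enat" where
  "lapp L W Z = (if (\<exists>f1 Ws g. app_complex L W Z f1 Ws g \<and> exact_everywhere Z f1 Ws g) then \<infinity>
     else Sup (enat ` {m. m \<ge> 1 \<and> (\<exists>f1 Ws g. app_complex L W Z f1 Ws g \<and> exact_upto Z f1 Ws g m)}))"

end

theory Submission
  imports Defs
begin

definition psum :: "(nat \<Rightarrow> 'w) \<Rightarrow> (nat \<Rightarrow> 'w) \<Rightarrow> nat \<Rightarrow> 'w" where
  "psum a b = (\<lambda>n. if even n then a (n div 2) else b (n div 2))"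
definition pfst :: "(nat \<Rightarrow> 'w) \<Rightarrow> nat \<Rightarrow> 'w" where "pfst x = (\<lambda>n. x (2*n))"
definition psnd :: "(nat \<Rightarrow> 'w) \<Rightarrow> nat \<Rightarrow> 'w" where "psnd x = (\<lambda>n. x (2*n+1))"

lemma pfst_psum[simp]: "pfst (psum a b) = a" by (simp add: pfst_def psum_def)
lemma psnd_psum[simp]: "psnd (psum a b) = b" by (simp add: psnd_def psum_def)
lemma psum_surj[simp]: "psum (pfst x) (psnd x) = x"
  unfolding psum_def pfst_def psnd_def
  by (rule ext) (auto elim!: evenE oddE)
lemma psum_eq_iff: "x = y \<longleftrightarrow> pfst x = pfst y \<and> psnd x = psnd y"
  by (metis psum_surj)
lemma psum_inj[simp]: "psum a b = psum c d \<longleftrightarrow> a = c \<and> b = d"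
  by (metis pfst_psum psnd_psum)

definition dsum :: "('a, 'w) umod \<Rightarrow> ('a, 'w) umod \<Rightarrow> ('a, 'w) umod" where
  "dsum A B = \<lparr>carrier = {x. pfst x \<in> carrier A \<and> psnd x \<in> carrier B},
     monoid.mult = (\<lambda>x y. undefined), one = undefined,
     ring.zero = psum (ring.zero A) (ring.zero B),
     ring.add = (\<lambda>x y. psum (ring.add A (pfst x) (pfst y)) (ring.add B (psnd x) (psnd y))),
     module.smult = (\<lambda>r x. psum (module.smult A r (pfst x)) (module.smult B r (psnd x)))\<rparr>"

lemma dsum_simps[simp]:
  "carrier (dsum A B) = {x. pfst x \<in> carrier A \<and> psnd x \<in> carrier B}"
  "\<zero>\<^bsub>dsum A B\<^esub> = psum \<zero>\<^bsub>A\<^esub> \<zero>\<^bsub>B\<^esub>"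
  "x \<oplus>\<^bsub>dsum A B\<^esub> y = psum (pfst x \<oplus>\<^bsub>A\<^esub> pfst y) (psnd x \<oplus>\<^bsub>B\<^esub> psnd y)"
  "r \<odot>\<^bsub>dsum A B\<^esub> x = psum (r \<odot>\<^bsub>A\<^esub> pfst x) (r \<odot>\<^bsub>B\<^esub> psnd x)"
  by (simp_all add: dsum_def)

lemma dsum_abelian_group:
  assumes A: "abelian_group A" and B: "abelian_group B"
  shows "abelian_group (dsum A B)"
proof -
  interpret A: abelian_group A by fact
  interpret B: abelian_group B by fact
  show ?thesis
  proof (rule abelian_groupI, goal_cases)
    case (1 x y) then show ?case by simp
  next
    case 2 then show ?case by simp
  next
    case (3 x y z) then show ?case by (simp add: A.a_assoc B.a_assoc)
  next
    case (4 x y) then show ?case by (simp add: A.a_comm B.a_comm)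
  next
    case (5 x) then show ?case by simp
  next
    case (6 x)
    show ?case
      apply (rule bexI[of _ "psum (\<ominus>\<^bsub>A\<^esub> pfst x) (\<ominus>\<^bsub>B\<^esub> psnd x)"])
      using 6 by (simp_all add: A.l_neg B.l_neg)
  qed
qed

lemma dsum_left_module:
  assumes A: "left_module L A" and B: "left_module L B"
  shows "left_module L (dsum A B)"
proof -
  interpret A: abelian_group A using A by (simp add: left_module_def)
  interpret B: abelian_group B using B by (simp add: left_module_def)
  have mA: "module_axioms L A" and mB: "module_axioms L B" and R: "ring L"
    using A B by (auto simp: left_module_def)
  show ?thesis
    unfolding left_module_def
    using R dsum_abelian_group[OF A.abelian_group_axioms B.abelian_group_axioms] mA mB
    by (simp add: module_axioms_def)
qed

lemma (in abelian_group) ag_minus_minus: "x \<in> carrier G \<Longrightarrow> y \<in> carrier G \<Longrightarrow> x \<ominus> (x \<ominus> y) = y"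
  by (simp add: a_minus_def minus_add a_assoc[symmetric] r_neg minus_minus)
lemma (in abelian_group) ag_minus_plus: "x \<in> carrier G \<Longrightarrow> y \<in> carrier G \<Longrightarrow> (x \<ominus> y) \<oplus> y = x"
  by (simp add: a_minus_def a_assoc l_neg)
lemma (in abelian_group) ag_plus_minus: "x \<in> carrier G \<Longrightarrow> y \<in> carrier G \<Longrightarrow> (x \<oplus> y) \<ominus> y = x"
  by (simp add: a_minus_def a_assoc r_neg)
lemma (in abelian_group) ag_minus_self: "x \<in> carrier G \<Longrightarrow> x \<ominus> x = \<zero>"
  by (simp add: a_minus_def r_neg)
lemma (in abelian_group) ag_minus_zero_iff: "x \<in> carrier G \<Longrightarrow> y \<in> carrier G \<Longrightarrow> x \<ominus> y = \<zero> \<longleftrightarrow> x = y"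
  by (metis ag_minus_plus ag_minus_self l_zero minus_closed)
lemma (in abelian_group) ag_minus_closed: "x \<in> carrier G \<Longrightarrow> y \<in> carrier G \<Longrightarrow> x \<ominus> y \<in> carrier G"
  by simp
lemma (in abelian_group) ag_add_minus_distrib:
  "a \<in> carrier G \<Longrightarrow> b \<in> carrier G \<Longrightarrow> c \<in> carrier G \<Longrightarrow> d \<in> carrier G \<Longrightarrow>
   (a \<oplus> b) \<ominus> (c \<oplus> d) = (a \<ominus> c) \<oplus> (b \<ominus> d)"
  by (simp add: a_minus_def minus_add a_ac)
lemma (in abelian_group) ag_zero_double: "x \<in> carrier G \<Longrightarrow> x \<oplus> x = x \<Longrightarrow> x = \<zero>"
  by (metis add.l_cancel_one)

lemma lm_ag: "left_module L A \<Longrightarrow> abelian_group A"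
  by (simp add: left_module_def)
lemma lm_ring: "left_module L A \<Longrightarrow> ring L"
  by (simp add: left_module_def)
lemma lm_smult_closed: "left_module L A \<Longrightarrow> r \<in> carrier L \<Longrightarrow> x \<in> carrier A \<Longrightarrow> r \<odot>\<^bsub>A\<^esub> x \<in> carrier A"
  by (simp add: left_module_def module_axioms_def)
lemma lm_smult_r_distr: "left_module L A \<Longrightarrow> r \<in> carrier L \<Longrightarrow> x \<in> carrier A \<Longrightarrow> y \<in> carrier A \<Longrightarrow>
   r \<odot>\<^bsub>A\<^esub> (x \<oplus>\<^bsub>A\<^esub> y) = r \<odot>\<^bsub>A\<^esub> x \<oplus>\<^bsub>A\<^esub> r \<odot>\<^bsub>A\<^esub> y"
  by (simp add: left_module_def module_axioms_def)
lemma lm_smult_zero: assumes "left_module L A" "r \<in> carrier L" shows "r \<odot>\<^bsub>A\<^esub> \<zero>\<^bsub>A\<^esub> = \<zero>\<^bsub>A\<^esub>"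
proof -
  interpret A: abelian_group A by (rule lm_ag[OF assms(1)])
  have c: "r \<odot>\<^bsub>A\<^esub> \<zero>\<^bsub>A\<^esub> \<in> carrier A" by (rule lm_smult_closed[OF assms(1) assms(2) A.zero_closed])
  have "r \<odot>\<^bsub>A\<^esub> \<zero>\<^bsub>A\<^esub> \<oplus>\<^bsub>A\<^esub> r \<odot>\<^bsub>A\<^esub> \<zero>\<^bsub>A\<^esub> = r \<odot>\<^bsub>A\<^esub> \<zero>\<^bsub>A\<^esub>"
    using lm_smult_r_distr[OF assms, of "\<zero>\<^bsub>A\<^esub>" "\<zero>\<^bsub>A\<^esub>"] by simp
  then show ?thesis by (rule A.ag_zero_double[OF c])
qed
lemma in_add_lm: "in_add L W A \<Longrightarrow> left_module L A"
  by (simp add: in_add_def)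

lemma lhom_closed: "lhom L D A f \<Longrightarrow> x \<in> carrier D \<Longrightarrow> f x \<in> carrier A"
  by (auto simp: lhom_def)
lemma lhom_add: "lhom L D A f \<Longrightarrow> x \<in> carrier D \<Longrightarrow> y \<in> carrier D \<Longrightarrow> f (x \<oplus>\<^bsub>D\<^esub> y) = f x \<oplus>\<^bsub>A\<^esub> f y"
  by (auto simp: lhom_def)
lemma lhom_smult: "lhom L D A f \<Longrightarrow> r \<in> carrier L \<Longrightarrow> x \<in> carrier D \<Longrightarrow> f (r \<odot>\<^bsub>D\<^esub> x) = r \<odot>\<^bsub>A\<^esub> f x"
  by (auto simp: lhom_def)
lemma lhom_zero: assumes "lhom L D A f" "abelian_group D" "abelian_group A"
  shows "f \<zero>\<^bsub>D\<^esub> = \<zero>\<^bsub>A\<^esub>"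
proof -
  interpret D: abelian_group D by fact
  interpret A: abelian_group A by fact
  have "f \<zero>\<^bsub>D\<^esub> \<oplus>\<^bsub>A\<^esub> f \<zero>\<^bsub>D\<^esub> = f \<zero>\<^bsub>D\<^esub>"
    using lhom_add[OF assms(1), of "\<zero>\<^bsub>D\<^esub>" "\<zero>\<^bsub>D\<^esub>"] by simp
  then show ?thesis by (rule A.ag_zero_double[OF lhom_closed[OF assms(1) D.zero_closed]])
qed
lemma lhom_minus: assumes "lhom L D A f" "abelian_group D" "abelian_group A" "x \<in> carrier D" "y \<in> carrier D"
  shows "f (x \<ominus>\<^bsub>D\<^esub> y) = f x \<ominus>\<^bsub>A\<^esub> f y"
proof -
  interpret D: abelian_group D by fact
  interpret A: abelian_group A by fact
  have "f (x \<ominus>\<^bsub>D\<^esub> y) \<oplus>\<^bsub>A\<^esub> f y = f x"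
    using lhom_add[OF assms(1), of "x \<ominus>\<^bsub>D\<^esub> y" y] assms(4,5) by (simp add: D.ag_minus_plus)
  then show ?thesis
    using assms lhom_closed[OF assms(1)] D.minus_closed A.ag_plus_minus
    by (metis)
qed

lemma lhom_comp: "lhom L A B f \<Longrightarrow> lhom L B C g \<Longrightarrow> lhom L A C (\<lambda>x. g (f x))"
  unfolding lhom_def Pi_def by auto
lemma lhom_restrict: "lhom L D A f \<Longrightarrow> S \<subseteq> carrier D \<Longrightarrow> lhom L (D\<lparr>carrier := S\<rparr>) A f"
  unfolding lhom_def Pi_def subset_iff by simp
lemma lhom_id_sub: "S \<subseteq> carrier D \<Longrightarrow> lhom L (D\<lparr>carrier := S\<rparr>) D id"
  by (auto simp: lhom_def)
lemma lhom_id: "lhom L D D (\<lambda>x. x)"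
  by (auto simp: lhom_def)
lemma lhom_zero_map: "left_module L A \<Longrightarrow> lhom L D A (\<lambda>_. \<zero>\<^bsub>A\<^esub>)"
proof -
  assume a: "left_module L A"
  interpret A: abelian_group A by (rule lm_ag[OF a])
  show ?thesis using lm_smult_zero[OF a] by (auto simp: lhom_def)
qed
lemma lhom_plus:
  assumes "lhom L D A f" "lhom L D A g" "left_module L A"
  shows "lhom L D A (\<lambda>x. f x \<oplus>\<^bsub>A\<^esub> g x)"
proof -
  interpret A: abelian_group A by (rule lm_ag[OF assms(3)])
  show ?thesis using assms unfolding lhom_def Pi_def
    by (auto simp: A.a_ac lm_smult_r_distr[OF assms(3)] lm_smult_closed[OF assms(3)])
qed
lemma lhom_minusf:
  assumes "lhom L D A f" "lhom L D A g" "left_module L A"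
  shows "lhom L D A (\<lambda>x. f x \<ominus>\<^bsub>A\<^esub> g x)"
proof -
  interpret A: abelian_group A by (rule lm_ag[OF assms(3)])
  have neg: "lhom L D A (\<lambda>x. \<ominus>\<^bsub>A\<^esub> g x)"
    unfolding lhom_def
  proof (intro conjI ballI)
    show "(\<lambda>x. \<ominus>\<^bsub>A\<^esub> g x) \<in> carrier D \<rightarrow> carrier A" using assms(2) by (auto simp: lhom_def)
  next
    fix x y assume "x \<in> carrier D" "y \<in> carrier D"
    then show "\<ominus>\<^bsub>A\<^esub> g (x \<oplus>\<^bsub>D\<^esub> y) = \<ominus>\<^bsub>A\<^esub> g x \<oplus>\<^bsub>A\<^esub> \<ominus>\<^bsub>A\<^esub> g y"
      using assms(2) by (simp add: lhom_add lhom_closed A.minus_add)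
  next
    fix r x assume r: "r \<in> carrier L" and x: "x \<in> carrier D"
    have gx: "g x \<in> carrier A" by (rule lhom_closed[OF assms(2) x])
    have "r \<odot>\<^bsub>A\<^esub> g x \<oplus>\<^bsub>A\<^esub> r \<odot>\<^bsub>A\<^esub> (\<ominus>\<^bsub>A\<^esub> g x) = \<zero>\<^bsub>A\<^esub>"
      using lm_smult_r_distr[OF assms(3) r gx, of "\<ominus>\<^bsub>A\<^esub> g x"] gx A.r_neg lm_smult_zero[OF assms(3) r]
      by simp
    then have "r \<odot>\<^bsub>A\<^esub> (\<ominus>\<^bsub>A\<^esub> g x) = \<ominus>\<^bsub>A\<^esub> (r \<odot>\<^bsub>A\<^esub> g x)"
      using gx r assms(3) lm_smult_closed
      by (metis A.a_inv_closed A.add.inv_equality A.a_comm)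
    then show "\<ominus>\<^bsub>A\<^esub> g (r \<odot>\<^bsub>D\<^esub> x) = r \<odot>\<^bsub>A\<^esub> \<ominus>\<^bsub>A\<^esub> g x"
      using assms(2) r x by (simp add: lhom_smult)
  qed
  show ?thesis unfolding a_minus_def using lhom_plus[OF assms(1) neg assms(3)] .
qed

lemma lhom_pfst: "lhom L (dsum A B) A pfst"
  by (auto simp: lhom_def)
lemma lhom_psnd: "lhom L (dsum A B) B psnd"
  by (auto simp: lhom_def)
lemma lhom_pair: "lhom L D A f \<Longrightarrow> lhom L D B g \<Longrightarrow> lhom L D (dsum A B) (\<lambda>x. psum (f x) (g x))"
  by (auto simp: lhom_def)

lemma finsum_dsum:
  assumes A: "abelian_group A" and B: "abelian_group B" and I: "finite I"
  shows "F \<in> I \<rightarrow> carrier (dsum A B) \<Longrightarrow>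
    finsum (dsum A B) F I = psum (finsum A (\<lambda>i. pfst (F i)) I) (finsum B (\<lambda>i. psnd (F i)) I)"
  using I
proof (induction I rule: finite_induct)
  case empty
  interpret D: abelian_group "dsum A B" using dsum_abelian_group[OF A B] .
  interpret A: abelian_group A by fact
  interpret B: abelian_group B by fact
  show ?case by simp
next
  case (insert a I)
  interpret D: abelian_group "dsum A B" using dsum_abelian_group[OF A B] .
  interpret A: abelian_group A by fact
  interpret B: abelian_group B by fact
  have F1: "F \<in> I \<rightarrow> carrier (dsum A B)" "F a \<in> carrier (dsum A B)" using insert by auto
  have "finsum (dsum A B) F (insert a I) = F a \<oplus>\<^bsub>dsum A B\<^esub> finsum (dsum A B) F I"
    using insert F1 by (simp add: D.finsum_insert)
  also have "\<dots> = psum (finsum A (\<lambda>i. pfst (F i)) (insert a I)) (finsum B (\<lambda>i. psnd (F i)) (insert a I))"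
    using insert F1 by (simp add: A.finsum_insert B.finsum_insert Pi_def)
  finally show ?case .
qed

lemma (in abelian_group) finsum_split_nat:
  fixes a b :: nat
  shows "f \<in> {i. i < a + b} \<rightarrow> carrier G \<Longrightarrow>
    finsum G f {i. i < a + b} = finsum G f {i. i < a} \<oplus> finsum G (\<lambda>j. f (j + a)) {j. j < b}"
proof (induction b)
  case 0
  have "f \<in> {i. i < a} \<rightarrow> carrier G" using 0 by simp
  then show ?case by simp
next
  case (Suc b)
  have f: "f \<in> {i. i < a + b} \<rightarrow> carrier G" "f (a + b) \<in> carrier G" using Suc.prems by auto
  have e1: "{i. i < a + Suc b} = insert (a + b) {i. i < a + b}" by auto
  have e2: "{j. j < Suc b} = insert b {j. j < b}" by auto
  have c1: "finsum G f {i. i < a} \<in> carrier G" using f(1) by (intro finsum_closed) (auto simp: Pi_def)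
  have c2: "(\<lambda>j. f (j + a)) \<in> {j. j < b} \<rightarrow> carrier G" using f(1) by (auto simp: Pi_def add.commute)
  have "finsum G f {i. i < a + Suc b} = f (a + b) \<oplus> finsum G f {i. i < a + b}"
    unfolding e1 using f by (intro finsum_insert) auto
  also have "\<dots> = f (a + b) \<oplus> (finsum G f {i. i < a} \<oplus> finsum G (\<lambda>j. f (j + a)) {j. j < b})"
    using Suc.IH[OF f(1)] by simp
  also have "\<dots> = finsum G f {i. i < a} \<oplus> (f (a + b) \<oplus> finsum G (\<lambda>j. f (j + a)) {j. j < b})"
    using c1 c2 f by (simp add: a_lcomm)
  also have "f (a + b) \<oplus> finsum G (\<lambda>j. f (j + a)) {j. j < b} = finsum G (\<lambda>j. f (j + a)) {j. j < Suc b}"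
    unfolding e2 using c2 f by (subst finsum_insert) (auto simp: add.commute)
  finally show ?case .
qed

lemma in_add_dsum:
  assumes A: "in_add L W A" and B: "in_add L W B"
  shows "in_add L W (dsum A B)"
proof -
  have lA: "left_module L A" and lB: "left_module L B" using A B by (auto simp: in_add_def)
  interpret A: abelian_group A by (rule lm_ag[OF lA])
  interpret B: abelian_group B by (rule lm_ag[OF lB])
  obtain nA :: nat and scA prA where hA: "\<forall>i<nA. lhom L A W (scA i) \<and> lhom L W A (prA i)"
    and sA: "\<forall>x\<in>carrier A. x = finsum A (\<lambda>i. prA i (scA i x)) {i. i < nA}"
    using A unfolding in_add_def by auto
  obtain nB :: nat and scB prB where hB: "\<forall>i<nB. lhom L B W (scB i) \<and> lhom L W B (prB i)"
    and sB: "\<forall>x\<in>carrier B. x = finsum B (\<lambda>i. prB i (scB i x)) {i. i < nB}"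
    using B unfolding in_add_def by auto
  define sc where "sc i = (if i < nA then (\<lambda>x. scA i (pfst x)) else (\<lambda>x. scB (i - nA) (psnd x)))" for i
  define pr where "pr i = (if i < nA then (\<lambda>w. psum (prA i w) \<zero>\<^bsub>B\<^esub>) else (\<lambda>w. psum \<zero>\<^bsub>A\<^esub> (prB (i - nA) w)))" for i
  have hom: "\<forall>i<nA+nB. lhom L (dsum A B) W (sc i) \<and> lhom L W (dsum A B) (pr i)"
  proof (intro allI impI conjI)
    fix i assume i: "i < nA + nB"
    show "lhom L (dsum A B) W (sc i)"
    proof (cases "i < nA")
      case True
      then have h: "lhom L A W (scA i)" using hA by blast
      show ?thesis using True lhom_comp[OF lhom_pfst h] by (simp add: sc_def)
    next
      case False
      then have h: "lhom L B W (scB (i - nA))" using hB i by simp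
      show ?thesis using False lhom_comp[OF lhom_psnd h] by (simp add: sc_def)
    qed
    show "lhom L W (dsum A B) (pr i)"
    proof (cases "i < nA")
      case True
      then have h: "lhom L W A (prA i)" using hA by blast
      show ?thesis using True lhom_pair[OF h lhom_zero_map[OF lB]] by (simp add: pr_def)
    next
      case False
      then have h: "lhom L W B (prB (i - nA))" using hB i by simp
      show ?thesis using False lhom_pair[OF lhom_zero_map[OF lA] h] by (simp add: pr_def)
    qed
  qed
  have "\<forall>x\<in>carrier (dsum A B). x = finsum (dsum A B) (\<lambda>i. pr i (sc i x)) {i. i < nA + nB}"
  proof
    fix x assume x: "x \<in> carrier (dsum A B)"
    have c: "(\<lambda>i. pr i (sc i x)) \<in> {i. i < nA + nB} \<rightarrow> carrier (dsum A B)"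
    proof
      fix i assume "i \<in> {i. i < nA + nB}"
      then have h1: "lhom L (dsum A B) W (sc i)" and h2: "lhom L W (dsum A B) (pr i)" using hom by auto
      show "pr i (sc i x) \<in> carrier (dsum A B)"
        by (rule lhom_closed[OF h2 lhom_closed[OF h1 x]])
    qed
    have cA: "(\<lambda>i. prA i (scA i (pfst x))) \<in> {i. i < nA} \<rightarrow> carrier A"
    proof
      fix i assume "i \<in> {i. i < nA}"
      then have h1: "lhom L A W (scA i)" and h2: "lhom L W A (prA i)" using hA by auto
      show "prA i (scA i (pfst x)) \<in> carrier A" using x by (simp add: lhom_closed[OF h2 lhom_closed[OF h1]])
    qed
    have cB: "(\<lambda>i. prB i (scB i (psnd x))) \<in> {i. i < nB} \<rightarrow> carrier B"
    proof
      fix i assume "i \<in> {i. i < nB}"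
      then have h1: "lhom L B W (scB i)" and h2: "lhom L W B (prB i)" using hB by auto
      show "prB i (scB i (psnd x)) \<in> carrier B" using x by (simp add: lhom_closed[OF h2 lhom_closed[OF h1]])
    qed
    have "finsum (dsum A B) (\<lambda>i. pr i (sc i x)) {i. i < nA + nB} =
      psum (finsum A (\<lambda>i. pfst (pr i (sc i x))) {i. i < nA + nB}) (finsum B (\<lambda>i. psnd (pr i (sc i x))) {i. i < nA + nB})"
      by (rule finsum_dsum[OF A.abelian_group_axioms B.abelian_group_axioms _ c]) simp
    also have "finsum A (\<lambda>i. pfst (pr i (sc i x))) {i. i < nA + nB} = pfst x"
    proof -
      have "finsum A (\<lambda>i. pfst (pr i (sc i x))) {i. i < nA + nB} =
        finsum A (\<lambda>i. pfst (pr i (sc i x))) {i. i < nA} \<oplus>\<^bsub>A\<^esub> finsum A (\<lambda>j. pfst (pr (j + nA) (sc (j + nA) x))) {j. j < nB}"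
        using c by (intro A.finsum_split_nat) (auto simp: Pi_def)
      also have "finsum A (\<lambda>i. pfst (pr i (sc i x))) {i. i < nA} = finsum A (\<lambda>i. prA i (scA i (pfst x))) {i. i < nA}"
        using cA by (intro A.finsum_cong) (auto simp: pr_def sc_def Pi_def)
      also have "\<dots> = pfst x" using sA x by simp
      also have "finsum A (\<lambda>j. pfst (pr (j + nA) (sc (j + nA) x))) {j. j < nB} = finsum A (\<lambda>j. \<zero>\<^bsub>A\<^esub>) {j. j < nB}"
        by (intro A.finsum_cong) (auto simp: pr_def sc_def Pi_def)
      also have "\<dots> = \<zero>\<^bsub>A\<^esub>" by (rule A.finsum_zero)
      finally show ?thesis using x by simp
    qed
    also have "finsum B (\<lambda>i. psnd (pr i (sc i x))) {i. i < nA + nB} = psnd x"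
    proof -
      have "finsum B (\<lambda>i. psnd (pr i (sc i x))) {i. i < nA + nB} =
        finsum B (\<lambda>i. psnd (pr i (sc i x))) {i. i < nA} \<oplus>\<^bsub>B\<^esub> finsum B (\<lambda>j. psnd (pr (j + nA) (sc (j + nA) x))) {j. j < nB}"
        using c by (intro B.finsum_split_nat) (auto simp: Pi_def)
      also have "finsum B (\<lambda>i. psnd (pr i (sc i x))) {i. i < nA} = finsum B (\<lambda>j. \<zero>\<^bsub>B\<^esub>) {i. i < nA}"
        by (intro B.finsum_cong) (auto simp: pr_def sc_def Pi_def)
      also have "\<dots> = \<zero>\<^bsub>B\<^esub>" by (rule B.finsum_zero)
      also have "finsum B (\<lambda>j. psnd (pr (j + nA) (sc (j + nA) x))) {j. j < nB} = finsum B (\<lambda>i. prB i (scB i (psnd x))) {i. i < nB}"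
        using cB by (intro B.finsum_cong) (auto simp: pr_def sc_def Pi_def)
      also have "\<dots> = psnd x" using sB x by simp
      finally show ?thesis using x by simp
    qed
    finally show "x = finsum (dsum A B) (\<lambda>i. pr i (sc i x)) {i. i < nA + nB}" by simp
  qed
  then show ?thesis unfolding in_add_def
    apply (intro conjI dsum_left_module[OF lA lB] exI[of _ "nA+nB"] exI[of _ sc] exI[of _ pr])
    using hom by auto
qed

definition ext_ok :: "'a ring \<Rightarrow> ('a, 'w) module \<Rightarrow> ('a, 'w) umod \<Rightarrow> (nat \<Rightarrow> 'w) set \<Rightarrow> bool" where
  "ext_ok L W V S \<longleftrightarrow> (\<forall>(Y :: ('a, 'w) umod) g. in_add L W Y \<and> lhom L (V\<lparr>carrier := S\<rparr>) Y g \<longrightarrow>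
      (\<exists>h. lhom L V Y h \<and> (\<forall>z\<in>S. g z = h z)))"

lemma left_approx_iff:
  "left_approx L W (V\<lparr>carrier := S\<rparr>) V id \<longleftrightarrow> in_add L W V \<and> S \<subseteq> carrier V \<and> ext_ok L W V S"
proof -
  have "lhom L (V\<lparr>carrier := S\<rparr>) V id \<longleftrightarrow> S \<subseteq> carrier V"
    unfolding lhom_def by auto
  then show ?thesis unfolding left_approx_def ext_ok_def by simp
qed

definition fac :: "('a, 'd) module \<Rightarrow> ('d \<Rightarrow> 'b) \<Rightarrow> ('d \<Rightarrow> 'c) \<Rightarrow> 'b \<Rightarrow> 'c" where
  "fac D h k v = k (SOME u. u \<in> carrier D \<and> h u = v)"

lemma factor:
  assumes D: "left_module L D" and A: "left_module L A" and Y: "left_module L Y"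
    and h: "lhom L D A h" and k: "lhom L D Y k"
    and ker: "\<forall>u\<in>carrier D. h u = \<zero>\<^bsub>A\<^esub> \<longrightarrow> k u = \<zero>\<^bsub>Y\<^esub>"
  shows "lhom L (A\<lparr>carrier := h ` carrier D\<rparr>) Y (fac D h k)"
    and "\<forall>u\<in>carrier D. fac D h k (h u) = k u"
proof -
  interpret D: abelian_group D by (rule lm_ag[OF D])
  interpret A: abelian_group A by (rule lm_ag[OF A])
  interpret Y: abelian_group Y by (rule lm_ag[OF Y])
  have wd: "k u = k u'" if "u \<in> carrier D" "u' \<in> carrier D" "h u = h u'" for u u'
  proof -
    have "h (u \<ominus>\<^bsub>D\<^esub> u') = \<zero>\<^bsub>A\<^esub>"
      using that lhom_minus[OF h D.abelian_group_axioms A.abelian_group_axioms] lhom_closed[OF h]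
      by (simp add: A.ag_minus_self)
    then have "k (u \<ominus>\<^bsub>D\<^esub> u') = \<zero>\<^bsub>Y\<^esub>" using ker that by simp
    then show ?thesis
      using that lhom_minus[OF k D.abelian_group_axioms Y.abelian_group_axioms] lhom_closed[OF k]
      by (simp add: Y.ag_minus_zero_iff)
  qed
  show fh: "\<forall>u\<in>carrier D. fac D h k (h u) = k u"
  proof
    fix u assume u: "u \<in> carrier D"
    have "\<exists>u0. u0 \<in> carrier D \<and> h u0 = h u" using u by blast
    then have "(SOME u0. u0 \<in> carrier D \<and> h u0 = h u) \<in> carrier D \<and> h (SOME u0. u0 \<in> carrier D \<and> h u0 = h u) = h u"
      by (rule someI_ex)
    then show "fac D h k (h u) = k u" unfolding fac_def using wd u by blast
  qed
  show "lhom L (A\<lparr>carrier := h ` carrier D\<rparr>) Y (fac D h k)"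
    unfolding lhom_def
  proof (intro conjI ballI)
    show "fac D h k \<in> carrier (A\<lparr>carrier := h ` carrier D\<rparr>) \<rightarrow> carrier Y"
      using fh lhom_closed[OF k] by auto
  next
    fix x y assume "x \<in> carrier (A\<lparr>carrier := h ` carrier D\<rparr>)" "y \<in> carrier (A\<lparr>carrier := h ` carrier D\<rparr>)"
    then obtain u u' where u: "u \<in> carrier D" "x = h u" and u': "u' \<in> carrier D" "y = h u'" by auto
    have "x \<oplus>\<^bsub>A\<lparr>carrier := h ` carrier D\<rparr>\<^esub> y = h (u \<oplus>\<^bsub>D\<^esub> u')" using u u' lhom_add[OF h] by simp
    then show "fac D h k (x \<oplus>\<^bsub>A\<lparr>carrier := h ` carrier D\<rparr>\<^esub> y) = fac D h k x \<oplus>\<^bsub>Y\<^esub> fac D h k y"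
      using fh u u' lhom_add[OF k] by simp
  next
    fix r x assume r: "r \<in> carrier L" and "x \<in> carrier (A\<lparr>carrier := h ` carrier D\<rparr>)"
    then obtain u where u: "u \<in> carrier D" "x = h u" by auto
    have "r \<odot>\<^bsub>A\<lparr>carrier := h ` carrier D\<rparr>\<^esub> x = h (r \<odot>\<^bsub>D\<^esub> u)" using u r lhom_smult[OF h] by simp
    then show "fac D h k (r \<odot>\<^bsub>A\<lparr>carrier := h ` carrier D\<rparr>\<^esub> x) = r \<odot>\<^bsub>Y\<^esub> fac D h k x"
      using fh u r lhom_smult[OF k] lm_smult_closed[OF D] by simp
  qed
qed

lemma ext_retract:
  assumes ext: "ext_ok L W V U" and SU: "S \<subseteq> U"
    and rho: "lhom L (V\<lparr>carrier := U\<rparr>) V \<rho>" and rS: "\<rho> ` U \<subseteq> S" and rid: "\<forall>s\<in>S. \<rho> s = s"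
  shows "ext_ok L W V S"
  unfolding ext_ok_def
proof (intro allI impI)
  fix Y :: "('a, 'b) umod" and g
  assume a: "in_add L W Y \<and> lhom L (V\<lparr>carrier := S\<rparr>) Y g"
  have "lhom L (V\<lparr>carrier := U\<rparr>) Y (\<lambda>u. g (\<rho> u))"
    unfolding lhom_def
  proof (intro conjI ballI)
    show "(\<lambda>u. g (\<rho> u)) \<in> carrier (V\<lparr>carrier := U\<rparr>) \<rightarrow> carrier Y"
      using a rS unfolding lhom_def by auto
  next
    fix x y assume "x \<in> carrier (V\<lparr>carrier := U\<rparr>)" "y \<in> carrier (V\<lparr>carrier := U\<rparr>)"
    then show "g (\<rho> (x \<oplus>\<^bsub>V\<lparr>carrier := U\<rparr>\<^esub> y)) = g (\<rho> x) \<oplus>\<^bsub>Y\<^esub> g (\<rho> y)"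
      using a rho rS unfolding lhom_def by (simp add: image_subset_iff)
  next
    fix r x assume "r \<in> carrier L" "x \<in> carrier (V\<lparr>carrier := U\<rparr>)"
    then show "g (\<rho> (r \<odot>\<^bsub>V\<lparr>carrier := U\<rparr>\<^esub> x)) = r \<odot>\<^bsub>Y\<^esub> g (\<rho> x)"
      using a rho rS unfolding lhom_def by (simp add: image_subset_iff)
  qed
  then obtain h where h: "lhom L V Y h" "\<forall>z\<in>U. g (\<rho> z) = h z"
    using ext a unfolding ext_ok_def by blast
  show "\<exists>h. lhom L V Y h \<and> (\<forall>z\<in>S. g z = h z)"
  proof (intro exI[of _ h] conjI ballI)
    show "lhom L V Y h" by (rule h(1))
    fix z assume z: "z \<in> S"
    have "g z = g (\<rho> z)" using rid z by simp
    also have "\<dots> = h z" using h(2) SU z by blast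
    finally show "g z = h z" .
  qed
qed

lemma ext_sum:
  assumes ext: "ext_ok L W A S" and SA: "S \<subseteq> carrier A" and z: "\<zero>\<^bsub>A\<^esub> \<in> S"
    and A: "left_module L A" and B: "left_module L B"
  shows "ext_ok L W (dsum A B) {x. pfst x \<in> S \<and> psnd x \<in> carrier B}"
  unfolding ext_ok_def
proof (intro allI impI)
  interpret A: abelian_group A by (rule lm_ag[OF A])
  interpret B: abelian_group B by (rule lm_ag[OF B])
  fix Y :: "('a, 'b) umod" and \<phi>
  assume a: "in_add L W Y \<and> lhom L ((dsum A B)\<lparr>carrier := {x. pfst x \<in> S \<and> psnd x \<in> carrier B}\<rparr>) Y \<phi>"
  have Y: "left_module L Y" using a in_add_lm by blast
  interpret Y: abelian_group Y by (rule lm_ag[OF Y])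
  have ph: "\<phi> \<in> {x. pfst x \<in> S \<and> psnd x \<in> carrier B} \<rightarrow> carrier Y"
    "\<And>x y. pfst x \<in> S \<Longrightarrow> psnd x \<in> carrier B \<Longrightarrow> pfst y \<in> S \<Longrightarrow> psnd y \<in> carrier B \<Longrightarrow>
       \<phi> (psum (pfst x \<oplus>\<^bsub>A\<^esub> pfst y) (psnd x \<oplus>\<^bsub>B\<^esub> psnd y)) = \<phi> x \<oplus>\<^bsub>Y\<^esub> \<phi> y"
    "\<And>r x. r \<in> carrier L \<Longrightarrow> pfst x \<in> S \<Longrightarrow> psnd x \<in> carrier B \<Longrightarrow>
       \<phi> (psum (r \<odot>\<^bsub>A\<^esub> pfst x) (r \<odot>\<^bsub>B\<^esub> psnd x)) = r \<odot>\<^bsub>Y\<^esub> \<phi> x"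
    using a unfolding lhom_def by auto
  have al: "lhom L (A\<lparr>carrier := S\<rparr>) Y (\<lambda>v. \<phi> (psum v \<zero>\<^bsub>B\<^esub>))"
    unfolding lhom_def
  proof (intro conjI ballI)
    show "(\<lambda>v. \<phi> (psum v \<zero>\<^bsub>B\<^esub>)) \<in> carrier (A\<lparr>carrier := S\<rparr>) \<rightarrow> carrier Y" using ph(1) by auto
  next
    fix x y assume "x \<in> carrier (A\<lparr>carrier := S\<rparr>)" "y \<in> carrier (A\<lparr>carrier := S\<rparr>)"
    then show "\<phi> (psum (x \<oplus>\<^bsub>A\<lparr>carrier := S\<rparr>\<^esub> y) \<zero>\<^bsub>B\<^esub>) = \<phi> (psum x \<zero>\<^bsub>B\<^esub>) \<oplus>\<^bsub>Y\<^esub> \<phi> (psum y \<zero>\<^bsub>B\<^esub>)"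
      using ph(2)[of "psum x \<zero>\<^bsub>B\<^esub>" "psum y \<zero>\<^bsub>B\<^esub>"] by simp
  next
    fix r x assume "r \<in> carrier L" "x \<in> carrier (A\<lparr>carrier := S\<rparr>)"
    then show "\<phi> (psum (r \<odot>\<^bsub>A\<lparr>carrier := S\<rparr>\<^esub> x) \<zero>\<^bsub>B\<^esub>) = r \<odot>\<^bsub>Y\<^esub> \<phi> (psum x \<zero>\<^bsub>B\<^esub>)"
      using ph(3)[of r "psum x \<zero>\<^bsub>B\<^esub>"] lm_smult_zero[OF B] by simp
  qed
  obtain al' where al': "lhom L A Y al'" "\<forall>v\<in>S. \<phi> (psum v \<zero>\<^bsub>B\<^esub>) = al' v"
    using ext a al unfolding ext_ok_def by blast
  have be: "lhom L B Y (\<lambda>w. \<phi> (psum \<zero>\<^bsub>A\<^esub> w))"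
    unfolding lhom_def
  proof (intro conjI ballI)
    show "(\<lambda>w. \<phi> (psum \<zero>\<^bsub>A\<^esub> w)) \<in> carrier B \<rightarrow> carrier Y" using ph(1) z by auto
  next
    fix x y assume "x \<in> carrier B" "y \<in> carrier B"
    then show "\<phi> (psum \<zero>\<^bsub>A\<^esub> (x \<oplus>\<^bsub>B\<^esub> y)) = \<phi> (psum \<zero>\<^bsub>A\<^esub> x) \<oplus>\<^bsub>Y\<^esub> \<phi> (psum \<zero>\<^bsub>A\<^esub> y)"
      using ph(2)[of "psum \<zero>\<^bsub>A\<^esub> x" "psum \<zero>\<^bsub>A\<^esub> y"] z by simp
  next
    fix r x assume "r \<in> carrier L" "x \<in> carrier B"
    then show "\<phi> (psum \<zero>\<^bsub>A\<^esub> (r \<odot>\<^bsub>B\<^esub> x)) = r \<odot>\<^bsub>Y\<^esub> \<phi> (psum \<zero>\<^bsub>A\<^esub> x)"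
      using ph(3)[of r "psum \<zero>\<^bsub>A\<^esub> x"] lm_smult_zero[OF A] z by simp
  qed
  define H where "H x = al' (pfst x) \<oplus>\<^bsub>Y\<^esub> \<phi> (psum \<zero>\<^bsub>A\<^esub> (psnd x))" for x
  have "lhom L (dsum A B) Y H"
    unfolding H_def
    by (rule lhom_plus[OF lhom_comp[OF lhom_pfst al'(1)] lhom_comp[OF lhom_psnd be] Y])
  moreover have "\<forall>x\<in>{x. pfst x \<in> S \<and> psnd x \<in> carrier B}. \<phi> x = H x"
  proof
    fix x assume x: "x \<in> {x. pfst x \<in> S \<and> psnd x \<in> carrier B}"
    have "\<phi> x = \<phi> (psum (pfst x \<oplus>\<^bsub>A\<^esub> \<zero>\<^bsub>A\<^esub>) (\<zero>\<^bsub>B\<^esub> \<oplus>\<^bsub>B\<^esub> psnd x))"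
      using x SA by auto
    also have "\<dots> = \<phi> (psum (pfst x) \<zero>\<^bsub>B\<^esub>) \<oplus>\<^bsub>Y\<^esub> \<phi> (psum \<zero>\<^bsub>A\<^esub> (psnd x))"
      using ph(2)[of "psum (pfst x) \<zero>\<^bsub>B\<^esub>" "psum \<zero>\<^bsub>A\<^esub> (psnd x)"] x z by simp
    also have "\<dots> = H x" using al'(2) x by (simp add: H_def)
    finally show "\<phi> x = H x" .
  qed
  ultimately show "\<exists>h. lhom L (dsum A B) Y h \<and> (\<forall>z\<in>{x. pfst x \<in> S \<and> psnd x \<in> carrier B}. \<phi> z = h z)"
    by blast
qed

lemma ext_img:
  assumes D: "left_module L D" and A: "left_module L A"
    and extA: "ext_ok L W A (h ` carrier D)" and h: "lhom L D A h" and e: "lhom L D D e"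
    and key: "\<forall>u\<in>carrier D. h u = \<zero>\<^bsub>A\<^esub> \<longrightarrow>
                 psum (h (u \<ominus>\<^bsub>D\<^esub> e u)) (e (u \<ominus>\<^bsub>D\<^esub> e u)) = \<zero>\<^bsub>dsum A D\<^esub>"
  shows "ext_ok L W (dsum A D) ((\<lambda>z. psum (h z) (e z)) ` carrier D)"
  unfolding ext_ok_def
proof (intro allI impI)
  interpret D: abelian_group D by (rule lm_ag[OF D])
  interpret A: abelian_group A by (rule lm_ag[OF A])
  have DS: "left_module L (dsum A D)" by (rule dsum_left_module[OF A D])
  interpret DS: abelian_group "dsum A D" by (rule lm_ag[OF DS])
  fix Y :: "('a, 'b) umod" and \<phi>
  assume a: "in_add L W Y \<and> lhom L ((dsum A D)\<lparr>carrier := (\<lambda>z. psum (h z) (e z)) ` carrier D\<rparr>) Y \<phi>"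
  have Y: "left_module L Y" using a in_add_lm by blast
  interpret Y: abelian_group Y by (rule lm_ag[OF Y])
  define d where "d z = psum (h z) (e z)" for z
  have dl: "lhom L D (dsum A D) d" unfolding d_def by (rule lhom_pair[OF h e])
  have ph: "lhom L ((dsum A D)\<lparr>carrier := d ` carrier D\<rparr>) Y \<phi>" using a unfolding d_def by simp
  have psi: "lhom L D Y (\<lambda>z. \<phi> (d z))"
    unfolding lhom_def
  proof (intro conjI ballI)
    show "(\<lambda>z. \<phi> (d z)) \<in> carrier D \<rightarrow> carrier Y" using ph unfolding lhom_def by auto
  next
    fix x y assume x: "x \<in> carrier D" and y: "y \<in> carrier D"
    have "\<phi> (d (x \<oplus>\<^bsub>D\<^esub> y)) = \<phi> (d x \<oplus>\<^bsub>dsum A D\<^esub> d y)" using lhom_add[OF dl x y] by simp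
    also have "\<dots> = \<phi> (d x) \<oplus>\<^bsub>Y\<^esub> \<phi> (d y)"
      using lhom_add[OF ph, of "d x" "d y"] x y by simp
    finally show "\<phi> (d (x \<oplus>\<^bsub>D\<^esub> y)) = \<phi> (d x) \<oplus>\<^bsub>Y\<^esub> \<phi> (d y)" .
  next
    fix r x assume r: "r \<in> carrier L" and x: "x \<in> carrier D"
    have "\<phi> (d (r \<odot>\<^bsub>D\<^esub> x)) = \<phi> (r \<odot>\<^bsub>dsum A D\<^esub> d x)" using lhom_smult[OF dl r x] by simp
    also have "\<dots> = r \<odot>\<^bsub>Y\<^esub> \<phi> (d x)"
      using lhom_smult[OF ph r, of "d x"] x by simp
    finally show "\<phi> (d (r \<odot>\<^bsub>D\<^esub> x)) = r \<odot>\<^bsub>Y\<^esub> \<phi> (d x)" .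
  qed
  have mm: "lhom L D D (\<lambda>u. u \<ominus>\<^bsub>D\<^esub> e u)" by (rule lhom_minusf[OF lhom_id e D])
  define k where "k u = \<phi> (d (u \<ominus>\<^bsub>D\<^esub> e u))" for u
  have kl: "lhom L D Y k" unfolding k_def by (rule lhom_comp[OF mm psi])
  have d0: "d \<zero>\<^bsub>D\<^esub> = \<zero>\<^bsub>dsum A D\<^esub>" by (rule lhom_zero[OF dl D.abelian_group_axioms DS.abelian_group_axioms])
  have p0: "\<phi> (d \<zero>\<^bsub>D\<^esub>) = \<zero>\<^bsub>Y\<^esub>" by (rule lhom_zero[OF psi D.abelian_group_axioms Y.abelian_group_axioms])
  have ker: "\<forall>u\<in>carrier D. h u = \<zero>\<^bsub>A\<^esub> \<longrightarrow> k u = \<zero>\<^bsub>Y\<^esub>"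
  proof (intro ballI impI)
    fix u assume u: "u \<in> carrier D" and hu: "h u = \<zero>\<^bsub>A\<^esub>"
    have "d (u \<ominus>\<^bsub>D\<^esub> e u) = \<zero>\<^bsub>dsum A D\<^esub>" using key u hu unfolding d_def by blast
    then show "k u = \<zero>\<^bsub>Y\<^esub>" unfolding k_def using d0 p0 by simp
  qed
  note fa = factor[OF D A Y h kl ker]
  obtain al' where al': "lhom L A Y al'" "\<forall>v\<in>h ` carrier D. fac D h k v = al' v"
    using extA a fa(1) unfolding ext_ok_def by blast
  define H where "H x = al' (pfst x) \<oplus>\<^bsub>Y\<^esub> \<phi> (d (psnd x))" for x
  have Hl: "lhom L (dsum A D) Y H"
    unfolding H_def by (rule lhom_plus[OF lhom_comp[OF lhom_pfst al'(1)] lhom_comp[OF lhom_psnd psi] Y])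
  have "\<forall>x\<in>(\<lambda>z. psum (h z) (e z)) ` carrier D. \<phi> x = H x"
  proof
    fix x assume "x \<in> (\<lambda>z. psum (h z) (e z)) ` carrier D"
    then obtain z where z: "z \<in> carrier D" and xz: "x = d z" unfolding d_def by auto
    have ez: "e z \<in> carrier D" by (rule lhom_closed[OF e z])
    have mz: "z \<ominus>\<^bsub>D\<^esub> e z \<in> carrier D" using z ez by simp
    have "H x = al' (h z) \<oplus>\<^bsub>Y\<^esub> \<phi> (d (e z))" unfolding H_def xz d_def by simp
    also have "al' (h z) = k z" using al'(2) fa(2) z by force
    also have "k z \<oplus>\<^bsub>Y\<^esub> \<phi> (d (e z)) = \<phi> (d ((z \<ominus>\<^bsub>D\<^esub> e z) \<oplus>\<^bsub>D\<^esub> e z))"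
      unfolding k_def using lhom_add[OF psi mz ez] by simp
    also have "(z \<ominus>\<^bsub>D\<^esub> e z) \<oplus>\<^bsub>D\<^esub> e z = z" using z ez by (rule D.ag_minus_plus)
    finally show "\<phi> x = H x" using xz by simp
  qed
  then show "\<exists>H. lhom L (dsum A D) Y H \<and> (\<forall>x\<in>(\<lambda>z. psum (h z) (e z)) ` carrier D. \<phi> x = H x)"
    using Hl by blast
qed

lemma (in abelian_group) ag_swap:
  assumes "a \<in> carrier G" "b \<in> carrier G" "c \<in> carrier G" "d \<in> carrier G" "a \<oplus> b = c \<oplus> d"
  shows "a \<ominus> c = d \<ominus> b"
proof -
  have "a \<ominus> c = (a \<oplus> b) \<ominus> (c \<oplus> b)"
    using assms(1-4) by (simp add: ag_add_minus_distrib ag_minus_self)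
  also have "\<dots> = (c \<oplus> d) \<ominus> (c \<oplus> b)" using assms by simp
  also have "\<dots> = d \<ominus> b" using assms(1-4) by (simp add: ag_add_minus_distrib ag_minus_self)
  finally show ?thesis .
qed

lemma (in abelian_group) ag_minus_zero2: "x \<in> carrier G \<Longrightarrow> x \<ominus> \<zero> = x"
  by (simp add: a_minus_def)

locale cx =
  fixes L :: "'a ring" and W :: "('a, 'w) module" and M :: "('a, 'm) module"
    and N1 N2 :: "'m set" and f1 :: "'m \<Rightarrow> nat \<Rightarrow> 'w" and Ws :: "nat \<Rightarrow> ('a, 'w) umod"
    and g :: "nat \<Rightarrow> (nat \<Rightarrow> 'w) \<Rightarrow> nat \<Rightarrow> 'w" and good :: "nat \<Rightarrow> bool"
  assumes M: "left_module L M" and N1: "left_submodule L M N1" and N2: "left_submodule L M N2"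
    and disj: "N1 \<inter> N2 = {\<zero>\<^bsub>M\<^esub>}" and dec: "carrier M = {x \<oplus>\<^bsub>M\<^esub> y | x y. x \<in> N1 \<and> y \<in> N2}"
    and cx: "app_complex L W M f1 Ws g" and inj: "inj_on f1 (carrier M)"
    and good_mono: "\<And>i. good (Suc i) \<Longrightarrow> good i"
    and good_ex: "\<And>i. good i \<Longrightarrow> 1 \<le> i \<Longrightarrow> exact_at M f1 Ws g i"
begin

interpretation MG: abelian_group M by (rule lm_ag[OF M])

lemma N1_sub: "N1 \<subseteq> carrier M" and N2_sub: "N2 \<subseteq> carrier M"
  using N1 N2 by (auto simp: left_submodule_def)

lemma N1_add: "a \<in> N1 \<Longrightarrow> b \<in> N1 \<Longrightarrow> a \<oplus>\<^bsub>M\<^esub> b \<in> N1"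
  and N2_add: "a \<in> N2 \<Longrightarrow> b \<in> N2 \<Longrightarrow> a \<oplus>\<^bsub>M\<^esub> b \<in> N2"
  and N1_neg: "a \<in> N1 \<Longrightarrow> \<ominus>\<^bsub>M\<^esub> a \<in> N1"
  and N2_neg: "a \<in> N2 \<Longrightarrow> \<ominus>\<^bsub>M\<^esub> a \<in> N2"
  and N1_sm: "r \<in> carrier L \<Longrightarrow> a \<in> N1 \<Longrightarrow> r \<odot>\<^bsub>M\<^esub> a \<in> N1"
  and N2_sm: "r \<in> carrier L \<Longrightarrow> a \<in> N2 \<Longrightarrow> r \<odot>\<^bsub>M\<^esub> a \<in> N2"
  and N1_zero: "\<zero>\<^bsub>M\<^esub> \<in> N1"
  and N2_zero: "\<zero>\<^bsub>M\<^esub> \<in> N2"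
  using N1 N2 unfolding left_submodule_def by auto

lemma N1_minus: "a \<in> N1 \<Longrightarrow> b \<in> N1 \<Longrightarrow> a \<ominus>\<^bsub>M\<^esub> b \<in> N1"
  by (simp add: a_minus_def N1_add N1_neg)
lemma N2_minus: "a \<in> N2 \<Longrightarrow> b \<in> N2 \<Longrightarrow> a \<ominus>\<^bsub>M\<^esub> b \<in> N2"
  by (simp add: a_minus_def N2_add N2_neg)

lemma uniq:
  assumes a: "a \<in> N1" "a' \<in> N1" and b: "b \<in> N2" "b' \<in> N2" and e: "a \<oplus>\<^bsub>M\<^esub> b = a' \<oplus>\<^bsub>M\<^esub> b'"
  shows "a = a'"
proof -
  have c: "a \<in> carrier M" "a' \<in> carrier M" "b \<in> carrier M" "b' \<in> carrier M"
    using a b N1_sub N2_sub by auto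
  have "a \<ominus>\<^bsub>M\<^esub> a' = b' \<ominus>\<^bsub>M\<^esub> b" by (rule MG.ag_swap[OF c(1) c(3) c(2) c(4) e])
  moreover have "a \<ominus>\<^bsub>M\<^esub> a' \<in> N1" using a by (rule N1_minus)
  moreover have "b' \<ominus>\<^bsub>M\<^esub> b \<in> N2" using b by (simp add: N2_minus)
  ultimately have "a \<ominus>\<^bsub>M\<^esub> a' = \<zero>\<^bsub>M\<^esub>" using disj by auto
  then show ?thesis using c by (simp add: MG.ag_minus_zero_iff)
qed

definition p1 :: "'m \<Rightarrow> 'm" where
  "p1 z = (THE a. a \<in> N1 \<and> (\<exists>b\<in>N2. z = a \<oplus>\<^bsub>M\<^esub> b))"

lemma p1_eq: assumes "a \<in> N1" "b \<in> N2" shows "p1 (a \<oplus>\<^bsub>M\<^esub> b) = a"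
  unfolding p1_def
proof (rule the_equality)
  show "a \<in> N1 \<and> (\<exists>b'\<in>N2. a \<oplus>\<^bsub>M\<^esub> b = a \<oplus>\<^bsub>M\<^esub> b')" using assms by blast
  fix a' assume "a' \<in> N1 \<and> (\<exists>b'\<in>N2. a \<oplus>\<^bsub>M\<^esub> b = a' \<oplus>\<^bsub>M\<^esub> b')"
  then obtain b' where "a' \<in> N1" "b' \<in> N2" "a \<oplus>\<^bsub>M\<^esub> b = a' \<oplus>\<^bsub>M\<^esub> b'" by blast
  then show "a' = a" using uniq assms by metis
qed

lemma decomp: assumes "z \<in> carrier M" obtains a b where "a \<in> N1" "b \<in> N2" "z = a \<oplus>\<^bsub>M\<^esub> b"
  using assms dec by blast

lemma p1_N1: "z \<in> carrier M \<Longrightarrow> p1 z \<in> N1"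
  by (metis decomp p1_eq)

lemma p1_id: assumes "a \<in> N1" shows "p1 a = a"
proof -
  have "a = a \<oplus>\<^bsub>M\<^esub> \<zero>\<^bsub>M\<^esub>" using assms N1_sub by auto
  then show ?thesis using p1_eq[OF assms N2_zero] by simp
qed

lemma p1_add: assumes "z \<in> carrier M" "z' \<in> carrier M"
  shows "p1 (z \<oplus>\<^bsub>M\<^esub> z') = p1 z \<oplus>\<^bsub>M\<^esub> p1 z'"
proof -
  obtain a b where ab: "a \<in> N1" "b \<in> N2" "z = a \<oplus>\<^bsub>M\<^esub> b" using decomp assms(1) by blast
  obtain a' b' where ab': "a' \<in> N1" "b' \<in> N2" "z' = a' \<oplus>\<^bsub>M\<^esub> b'" using decomp assms(2) by blast
  have c: "a \<in> carrier M" "a' \<in> carrier M" "b \<in> carrier M" "b' \<in> carrier M"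
    using ab ab' N1_sub N2_sub by auto
  have "z \<oplus>\<^bsub>M\<^esub> z' = (a \<oplus>\<^bsub>M\<^esub> a') \<oplus>\<^bsub>M\<^esub> (b \<oplus>\<^bsub>M\<^esub> b')"
    using ab ab' c by (simp add: MG.a_ac)
  then show ?thesis using p1_eq ab ab' N1_add N2_add by simp
qed

lemma p1_smult: assumes "r \<in> carrier L" "z \<in> carrier M"
  shows "p1 (r \<odot>\<^bsub>M\<^esub> z) = r \<odot>\<^bsub>M\<^esub> p1 z"
proof -
  obtain a b where ab: "a \<in> N1" "b \<in> N2" "z = a \<oplus>\<^bsub>M\<^esub> b" using decomp assms(2) by blast
  have c: "a \<in> carrier M" "b \<in> carrier M" using ab N1_sub N2_sub by auto
  have "r \<odot>\<^bsub>M\<^esub> z = r \<odot>\<^bsub>M\<^esub> a \<oplus>\<^bsub>M\<^esub> r \<odot>\<^bsub>M\<^esub> b"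
    using ab(3) lm_smult_r_distr[OF M assms(1) c] by simp
  then show ?thesis using p1_eq N1_sm N2_sm assms ab by simp
qed

lemma f1_hom: "lhom L M (Ws 1) f1" using cx by (simp add: app_complex_def)

definition r1 :: "(nat \<Rightarrow> 'w) \<Rightarrow> nat \<Rightarrow> 'w" where
  "r1 x = f1 (p1 (the_inv_into (carrier M) f1 x))"

lemma r1_f1: "z \<in> carrier M \<Longrightarrow> r1 (f1 z) = f1 (p1 z)"
  unfolding r1_def using inj by (simp add: the_inv_into_f_f)

lemma r1_hom: "lhom L ((Ws 1)\<lparr>carrier := f1 ` carrier M\<rparr>) (Ws 1) r1"
  unfolding lhom_def
proof (intro conjI ballI)
  show "r1 \<in> carrier (Ws 1\<lparr>carrier := f1 ` carrier M\<rparr>) \<rightarrow> carrier (Ws 1)"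
  proof
    fix x assume "x \<in> carrier (Ws 1\<lparr>carrier := f1 ` carrier M\<rparr>)"
    then obtain z where z: "z \<in> carrier M" "x = f1 z" by auto
    have "p1 z \<in> carrier M" using p1_N1 N1_sub z by auto
    then show "r1 x \<in> carrier (Ws 1)" using z r1_f1 lhom_closed[OF f1_hom] by simp
  qed
next
  fix x y assume "x \<in> carrier (Ws 1\<lparr>carrier := f1 ` carrier M\<rparr>)" "y \<in> carrier (Ws 1\<lparr>carrier := f1 ` carrier M\<rparr>)"
  then obtain z z' where z: "z \<in> carrier M" "x = f1 z" and z': "z' \<in> carrier M" "y = f1 z'" by auto
  have pz: "p1 z \<in> carrier M" "p1 z' \<in> carrier M" using p1_N1 N1_sub z z' by auto
  have e: "x \<oplus>\<^bsub>Ws 1\<lparr>carrier := f1 ` carrier M\<rparr>\<^esub> y = f1 (z \<oplus>\<^bsub>M\<^esub> z')"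
    using z z' lhom_add[OF f1_hom] by simp
  have "r1 (f1 (z \<oplus>\<^bsub>M\<^esub> z')) = f1 (p1 (z \<oplus>\<^bsub>M\<^esub> z'))" using z z' by (simp add: r1_f1)
  also have "\<dots> = f1 (p1 z \<oplus>\<^bsub>M\<^esub> p1 z')" using z z' by (simp add: p1_add)
  also have "\<dots> = f1 (p1 z) \<oplus>\<^bsub>Ws 1\<^esub> f1 (p1 z')" using pz by (rule lhom_add[OF f1_hom])
  finally show "r1 (x \<oplus>\<^bsub>Ws 1\<lparr>carrier := f1 ` carrier M\<rparr>\<^esub> y) = r1 x \<oplus>\<^bsub>Ws 1\<^esub> r1 y"
    using e z z' by (simp add: r1_f1)
next
  fix r x assume r: "r \<in> carrier L" and "x \<in> carrier (Ws 1\<lparr>carrier := f1 ` carrier M\<rparr>)"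
  then obtain z where z: "z \<in> carrier M" "x = f1 z" by auto
  have pz: "p1 z \<in> carrier M" using p1_N1 N1_sub z by auto
  have e: "r \<odot>\<^bsub>Ws 1\<lparr>carrier := f1 ` carrier M\<rparr>\<^esub> x = f1 (r \<odot>\<^bsub>M\<^esub> z)"
    using z r lhom_smult[OF f1_hom] by simp
  have "r1 (f1 (r \<odot>\<^bsub>M\<^esub> z)) = f1 (p1 (r \<odot>\<^bsub>M\<^esub> z))" using z r lm_smult_closed[OF M r] by (simp add: r1_f1)
  also have "\<dots> = f1 (r \<odot>\<^bsub>M\<^esub> p1 z)" using z r by (simp add: p1_smult)
  also have "\<dots> = r \<odot>\<^bsub>Ws 1\<^esub> f1 (p1 z)" using r pz by (rule lhom_smult[OF f1_hom])
  finally show "r1 (r \<odot>\<^bsub>Ws 1\<lparr>carrier := f1 ` carrier M\<rparr>\<^esub> x) = r \<odot>\<^bsub>Ws 1\<^esub> r1 x"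
    using e z by (simp add: r1_f1)
qed

lemma r1_img: "r1 ` (f1 ` carrier M) \<subseteq> f1 ` N1"
  using r1_f1 p1_N1 by auto

lemma r1_id: "\<forall>s\<in>f1 ` N1. r1 s = s"
  using r1_f1 p1_id N1_sub by auto

end

type_synonym ('a, 'w) stt = "('a, 'w) umod \<times> ((nat \<Rightarrow> 'w) \<Rightarrow> (nat \<Rightarrow> 'w)) \<times> (nat \<Rightarrow> 'w) set
   \<times> ((nat \<Rightarrow> 'w) \<Rightarrow> (nat \<Rightarrow> 'w)) \<times> (nat \<Rightarrow> 'w) set"

context cx
begin

interpretation MG: abelian_group M by (rule lm_ag[OF M])

lemma cx_add: "1 \<le> i \<Longrightarrow> in_add L W (Ws i)"
  using cx by (simp add: app_complex_def)
lemma cx_lm: "1 \<le> i \<Longrightarrow> left_module L (Ws i)"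
  using cx_add in_add_lm by blast
lemma cx_hom: "1 \<le> i \<Longrightarrow> lhom L (Ws i) (Ws (Suc i)) (g i)"
  using cx by (simp add: app_complex_def)
lemma cx_f1: "z \<in> carrier M \<Longrightarrow> g 1 (f1 z) = \<zero>\<^bsub>Ws 2\<^esub>"
  using cx by (simp add: app_complex_def)
lemma cx_gg: "1 \<le> i \<Longrightarrow> x \<in> carrier (Ws i) \<Longrightarrow> g (Suc i) (g i x) = \<zero>\<^bsub>Ws (Suc (Suc i))\<^esub>"
  using cx by (simp add: app_complex_def)
lemma cx_ap1: "ext_ok L W (Ws 1) (f1 ` carrier M)"
  using cx unfolding app_complex_def by (simp add: left_approx_iff)
lemma cx_api: "1 \<le> i \<Longrightarrow> ext_ok L W (Ws (Suc i)) (g i ` carrier (Ws i))"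
  using cx unfolding app_complex_def by (simp add: left_approx_iff)

definition ee :: "nat \<Rightarrow> ('a, 'w) umod \<Rightarrow> (nat \<Rightarrow> 'w) set \<Rightarrow> ((nat \<Rightarrow> 'w) \<Rightarrow> (nat \<Rightarrow> 'w)) \<Rightarrow> (nat \<Rightarrow> 'w) \<Rightarrow> (nat \<Rightarrow> 'w)" where
  "ee i D U r = (if good i then (SOME e. lhom L D D e \<and> (\<forall>z\<in>U. e z = z \<ominus>\<^bsub>D\<^esub> r z)) else (\<lambda>_. \<zero>\<^bsub>D\<^esub>))"

definition nxt :: "nat \<Rightarrow> ('a, 'w) stt \<Rightarrow> ('a, 'w) stt" where
  "nxt i s = (case s of (D, h, U, r, S) \<Rightarrow>
     (let e = ee i D U r; d = (\<lambda>z. psum (h z) (e z)); D' = dsum (Ws (Suc i)) D in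
      (D', (\<lambda>z. g (Suc i) (pfst z)), {x. pfst x \<in> h ` carrier D \<and> psnd x \<in> carrier D},
       (\<lambda>x. fac D h (\<lambda>u. d (u \<ominus>\<^bsub>D\<^esub> e u)) (pfst x) \<oplus>\<^bsub>D'\<^esub> d (psnd x)), d ` carrier D)))"

lemma nxt_eq: "nxt i (D, h, U, r, S) =
  (dsum (Ws (Suc i)) D, (\<lambda>z. g (Suc i) (pfst z)), {x. pfst x \<in> h ` carrier D \<and> psnd x \<in> carrier D},
   (\<lambda>x. fac D h (\<lambda>u. psum (h (u \<ominus>\<^bsub>D\<^esub> ee i D U r u)) (ee i D U r (u \<ominus>\<^bsub>D\<^esub> ee i D U r u))) (pfst x)
      \<oplus>\<^bsub>dsum (Ws (Suc i)) D\<^esub> psum (h (psnd x)) (ee i D U r (psnd x))),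
   (\<lambda>z. psum (h z) (ee i D U r z)) ` carrier D)"
  by (simp add: nxt_def Let_def)

definition dmap :: "nat \<Rightarrow> ('a, 'w) stt \<Rightarrow> (nat \<Rightarrow> 'w) \<Rightarrow> (nat \<Rightarrow> 'w)" where
  "dmap i s = (case s of (D, h, U, r, S) \<Rightarrow> (\<lambda>z. psum (h z) (ee i D U r z)))"

primrec st :: "nat \<Rightarrow> ('a, 'w) stt" where
  "st 0 = (Ws 1, g 1, f1 ` carrier M, r1, f1 ` N1)"
| "st (Suc k) = nxt (Suc k) (st k)"

definition INV :: "nat \<Rightarrow> ('a, 'w) umod \<Rightarrow> ((nat \<Rightarrow> 'w) \<Rightarrow> (nat \<Rightarrow> 'w)) \<Rightarrow> (nat \<Rightarrow> 'w) set
   \<Rightarrow> ((nat \<Rightarrow> 'w) \<Rightarrow> (nat \<Rightarrow> 'w)) \<Rightarrow> (nat \<Rightarrow> 'w) set \<Rightarrow> bool" where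
  "INV i D h U r S \<longleftrightarrow>
   in_add L W D \<and> lhom L D (Ws (Suc i)) h \<and> h ` carrier D = g i ` carrier (Ws i) \<and>
   U \<subseteq> carrier D \<and> S \<subseteq> U \<and> (\<forall>z\<in>U. h z = \<zero>\<^bsub>Ws (Suc i)\<^esub>) \<and> ext_ok L W D U \<and> ext_ok L W D S \<and>
   ((i = 1 \<or> good (i - 1)) \<longrightarrow> lhom L (D\<lparr>carrier := U\<rparr>) D r \<and> r ` U \<subseteq> S \<and> (\<forall>s\<in>S. r s = s)) \<and>
   (good i \<longrightarrow> {z \<in> carrier D. h z = \<zero>\<^bsub>Ws (Suc i)\<^esub>} = U)"

lemma INV_base: "INV 1 (Ws 1) (g 1) (f1 ` carrier M) r1 (f1 ` N1)"
  unfolding INV_def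
proof (intro conjI impI)
  show "in_add L W (Ws 1)" by (rule cx_add) simp
  show "lhom L (Ws 1) (Ws (Suc 1)) (g 1)" by (rule cx_hom) simp
  show "g 1 ` carrier (Ws 1) = g 1 ` carrier (Ws 1)" ..
  show U: "f1 ` carrier M \<subseteq> carrier (Ws 1)" using lhom_closed[OF f1_hom] by auto
  show SU: "f1 ` N1 \<subseteq> f1 ` carrier M" using N1_sub by auto
  show "\<forall>z\<in>f1 ` carrier M. g 1 z = \<zero>\<^bsub>Ws (Suc 1)\<^esub>" using cx_f1 by (simp add: numeral_2_eq_2)
  show "ext_ok L W (Ws 1) (f1 ` carrier M)" by (rule cx_ap1)
  show "ext_ok L W (Ws 1) (f1 ` N1)" by (rule ext_retract[OF cx_ap1 SU r1_hom r1_img r1_id])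
  show "lhom L (Ws 1\<lparr>carrier := f1 ` carrier M\<rparr>) (Ws 1) r1" by (rule r1_hom)
  show "r1 ` f1 ` carrier M \<subseteq> f1 ` N1" by (rule r1_img)
  show "\<forall>s\<in>f1 ` N1. r1 s = s" by (rule r1_id)
  assume "good 1"
  then have "exact_at M f1 Ws g 1" using good_ex by simp
  then show "{z \<in> carrier (Ws 1). g 1 z = \<zero>\<^bsub>Ws (Suc 1)\<^esub>} = f1 ` carrier M"
    by (simp add: exact_at_def in_image_def)
qed

end

context cx
begin

lemma step:
  assumes i: "1 \<le> i" and I: "INV i D h U r S"
  defines "e \<equiv> ee i D U r"
  defines "d \<equiv> (\<lambda>z. psum (h z) (e z))"
  shows "lhom L D (dsum (Ws (Suc i)) D) d"
    and "\<forall>s\<in>S. d s = \<zero>\<^bsub>dsum (Ws (Suc i)) D\<^esub>"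
    and "good i \<Longrightarrow> {z \<in> carrier D. d z = \<zero>\<^bsub>dsum (Ws (Suc i)) D\<^esub>} = S"
    and "INV (Suc i) (dsum (Ws (Suc i)) D) (\<lambda>z. g (Suc i) (pfst z))
           {x. pfst x \<in> h ` carrier D \<and> psnd x \<in> carrier D}
           (\<lambda>x. fac D h (\<lambda>u. d (u \<ominus>\<^bsub>D\<^esub> e u)) (pfst x) \<oplus>\<^bsub>dsum (Ws (Suc i)) D\<^esub> d (psnd x))
           (d ` carrier D)"
proof -
  define A where "A = Ws (Suc i)"
  define D' where "D' = dsum A D"
  have Dadd: "in_add L W D" using I by (simp add: INV_def)
  have hl: "lhom L D A h" using I by (simp add: INV_def A_def)
  have himg: "h ` carrier D = g i ` carrier (Ws i)" using I by (simp add: INV_def)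
  have UD: "U \<subseteq> carrier D" and SU: "S \<subseteq> U" using I by (simp_all add: INV_def)
  have hU: "\<forall>z\<in>U. h z = \<zero>\<^bsub>A\<^esub>" using I by (simp add: INV_def A_def)
  have extU: "ext_ok L W D U" and extS: "ext_ok L W D S" using I by (simp_all add: INV_def)
  have rprop: "i = 1 \<or> good (i - 1) \<Longrightarrow> lhom L (D\<lparr>carrier := U\<rparr>) D r \<and> r ` U \<subseteq> S \<and> (\<forall>s\<in>S. r s = s)"
    using I by (simp add: INV_def)
  have kerU: "good i \<Longrightarrow> {z \<in> carrier D. h z = \<zero>\<^bsub>A\<^esub>} = U" using I by (simp add: INV_def A_def)
  have Dl: "left_module L D" by (rule in_add_lm[OF Dadd])
  have Aadd: "in_add L W A" unfolding A_def by (rule cx_add) simp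
  have Al: "left_module L A" by (rule in_add_lm[OF Aadd])
  have D'l: "left_module L D'" unfolding D'_def by (rule dsum_left_module[OF Al Dl])
  interpret DG: abelian_group D by (rule lm_ag[OF Dl])
  interpret AG: abelian_group A by (rule lm_ag[OF Al])
  interpret D'G: abelian_group D' by (rule lm_ag[OF D'l])
  have goodr: "good i \<Longrightarrow> lhom L (D\<lparr>carrier := U\<rparr>) D r \<and> r ` U \<subseteq> S \<and> (\<forall>s\<in>S. r s = s)"
  proof -
    assume gi: "good i"
    have "i = 1 \<or> good (i - 1)"
    proof (cases "i = 1")
      case False
      then have "i = Suc (i - 1)" using i by simp
      then show ?thesis using gi good_mono by metis
    qed simp
    then show ?thesis by (rule rprop)
  qed
  have rin: "good i \<Longrightarrow> u \<in> U \<Longrightarrow> r u \<in> S" for u using goodr by blast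
  have rid: "good i \<Longrightarrow> s \<in> S \<Longrightarrow> r s = s" for s using goodr by blast
  have el: "lhom L D D e" and eU: "good i \<Longrightarrow> \<forall>z\<in>U. e z = z \<ominus>\<^bsub>D\<^esub> r z"
  proof -
    have "lhom L D D e \<and> (good i \<longrightarrow> (\<forall>z\<in>U. e z = z \<ominus>\<^bsub>D\<^esub> r z))"
    proof (cases "good i")
      case True
      have rl: "lhom L (D\<lparr>carrier := U\<rparr>) D r" using goodr[OF True] by blast
      have idl: "lhom L (D\<lparr>carrier := U\<rparr>) D (\<lambda>x. x)" by (rule lhom_restrict[OF lhom_id UD])
      have "lhom L (D\<lparr>carrier := U\<rparr>) D (\<lambda>z. z \<ominus>\<^bsub>D\<^esub> r z)" by (rule lhom_minusf[OF idl rl Dl])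
      then have "\<exists>e'. lhom L D D e' \<and> (\<forall>z\<in>U. z \<ominus>\<^bsub>D\<^esub> r z = e' z)"
        using extU Dadd unfolding ext_ok_def by blast
      then have ex: "\<exists>e'. lhom L D D e' \<and> (\<forall>z\<in>U. e' z = z \<ominus>\<^bsub>D\<^esub> r z)" by metis
      have "e = (SOME e. lhom L D D e \<and> (\<forall>z\<in>U. e z = z \<ominus>\<^bsub>D\<^esub> r z))"
        using True by (simp add: e_def ee_def)
      then show ?thesis using someI_ex[OF ex] True by simp
    next
      case False
      then have "e = (\<lambda>_. \<zero>\<^bsub>D\<^esub>)" by (simp add: e_def ee_def)
      then show ?thesis using False lhom_zero_map[OF Dl] by simp
    qed
    then show "lhom L D D e" and "good i \<Longrightarrow> \<forall>z\<in>U. e z = z \<ominus>\<^bsub>D\<^esub> r z" by auto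
  qed
  have e0: "\<not> good i \<Longrightarrow> e z = \<zero>\<^bsub>D\<^esub>" for z by (simp add: e_def ee_def)
  have dl: "lhom L D D' d" unfolding d_def D'_def by (rule lhom_pair[OF hl el])
  then show "lhom L D (dsum (Ws (Suc i)) D) d" by (simp add: D'_def A_def)
  have z0: "\<zero>\<^bsub>D'\<^esub> = psum \<zero>\<^bsub>A\<^esub> \<zero>\<^bsub>D\<^esub>" by (simp add: D'_def)
  have dS: "\<forall>s\<in>S. d s = \<zero>\<^bsub>D'\<^esub>"
  proof
    fix s assume s: "s \<in> S"
    have sD: "s \<in> carrier D" using s SU UD by auto
    have "h s = \<zero>\<^bsub>A\<^esub>" using hU s SU by auto
    moreover have "e s = \<zero>\<^bsub>D\<^esub>"
    proof (cases "good i")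
      case True
      then have "e s = s \<ominus>\<^bsub>D\<^esub> r s" using eU s SU by auto
      also have "\<dots> = \<zero>\<^bsub>D\<^esub>" using rid[OF True s] sD by (simp add: DG.ag_minus_self)
      finally show ?thesis .
    qed (simp add: e0)
    ultimately show "d s = \<zero>\<^bsub>D'\<^esub>" by (simp add: d_def z0)
  qed
  then show "\<forall>s\<in>S. d s = \<zero>\<^bsub>dsum (Ws (Suc i)) D\<^esub>" by (simp add: D'_def A_def)
  show "good i \<Longrightarrow> {z \<in> carrier D. d z = \<zero>\<^bsub>dsum (Ws (Suc i)) D\<^esub>} = S"
  proof -
    assume gi: "good i"
    have "{z \<in> carrier D. d z = \<zero>\<^bsub>D'\<^esub>} = S"
    proof (intro equalityI subsetI)
      fix z assume "z \<in> {z \<in> carrier D. d z = \<zero>\<^bsub>D'\<^esub>}"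
      then have z: "z \<in> carrier D" and dz: "psum (h z) (e z) = psum \<zero>\<^bsub>A\<^esub> \<zero>\<^bsub>D\<^esub>" by (auto simp: d_def z0)
      then have "h z = \<zero>\<^bsub>A\<^esub>" "e z = \<zero>\<^bsub>D\<^esub>" by auto
      then have zU: "z \<in> U" using kerU[OF gi] z by auto
      then have rz: "r z \<in> carrier D" using rin[OF gi zU] SU UD by auto
      have "z \<ominus>\<^bsub>D\<^esub> r z = \<zero>\<^bsub>D\<^esub>" using eU[OF gi] zU \<open>e z = \<zero>\<^bsub>D\<^esub>\<close> by auto
      then have "z = r z" using z rz by (simp add: DG.ag_minus_zero_iff)
      then show "z \<in> S" using rin[OF gi zU] by simp
    next
      fix z assume "z \<in> S"
      then show "z \<in> {z \<in> carrier D. d z = \<zero>\<^bsub>D'\<^esub>}" using dS SU UD by auto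
    qed
    then show ?thesis by (simp add: D'_def A_def)
  qed
  have key: "\<forall>u\<in>carrier D. h u = \<zero>\<^bsub>A\<^esub> \<longrightarrow> psum (h (u \<ominus>\<^bsub>D\<^esub> e u)) (e (u \<ominus>\<^bsub>D\<^esub> e u)) = \<zero>\<^bsub>D'\<^esub>"
  proof (intro ballI impI)
    fix u assume u: "u \<in> carrier D" and hu: "h u = \<zero>\<^bsub>A\<^esub>"
    show "psum (h (u \<ominus>\<^bsub>D\<^esub> e u)) (e (u \<ominus>\<^bsub>D\<^esub> e u)) = \<zero>\<^bsub>D'\<^esub>"
    proof (cases "good i")
      case True
      have uU: "u \<in> U" using kerU[OF True] u hu by auto
      have ru: "r u \<in> S" by (rule rin[OF True uU])
      have ruD: "r u \<in> carrier D" using ru SU UD by auto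
      have "u \<ominus>\<^bsub>D\<^esub> e u = r u" using eU[OF True] uU u ruD by (simp add: DG.ag_minus_minus)
      then show ?thesis using dS ru by (simp add: d_def)
    next
      case False
      have "u \<ominus>\<^bsub>D\<^esub> e u = u" using u by (simp add: e0[OF False] DG.ag_minus_zero2)
      then show ?thesis using hu by (simp add: e0[OF False] z0)
    qed
  qed
  have Ai: "1 \<le> Suc i" by simp
  have gsl: "lhom L A (Ws (Suc (Suc i))) (g (Suc i))" unfolding A_def by (rule cx_hom[OF Ai])
  have hD_A: "h ` carrier D \<subseteq> carrier A" using lhom_closed[OF hl] by auto
  have h0: "h \<zero>\<^bsub>D\<^esub> = \<zero>\<^bsub>A\<^esub>" by (rule lhom_zero[OF hl DG.abelian_group_axioms AG.abelian_group_axioms])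
  have z_hD: "\<zero>\<^bsub>A\<^esub> \<in> h ` carrier D" using h0 DG.zero_closed by force
  have extA: "ext_ok L W A (h ` carrier D)" unfolding himg A_def by (rule cx_api[OF i])
  define U' where "U' = {x. pfst x \<in> h ` carrier D \<and> psnd x \<in> carrier D}"
  define k where "k u = d (u \<ominus>\<^bsub>D\<^esub> e u)" for u
  have kl: "lhom L D D' k" unfolding k_def by (rule lhom_comp[OF lhom_minusf[OF lhom_id el Dl] dl])
  have kker: "\<forall>u\<in>carrier D. h u = \<zero>\<^bsub>A\<^esub> \<longrightarrow> k u = \<zero>\<^bsub>D'\<^esub>" using key by (simp add: k_def d_def)
  note fa = factor[OF Dl Al D'l hl kl kker]
  define r' where "r' x = fac D h k (pfst x) \<oplus>\<^bsub>D'\<^esub> d (psnd x)" for x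
  have U'D: "U' \<subseteq> carrier D'" using hD_A by (auto simp: U'_def D'_def)
  have dD: "d z \<in> carrier D'" if "z \<in> carrier D" for z by (rule lhom_closed[OF dl that])
  have "INV (Suc i) D' (\<lambda>z. g (Suc i) (pfst z)) U' r' (d ` carrier D)"
    unfolding INV_def
  proof (intro conjI impI)
    show "in_add L W D'" unfolding D'_def by (rule in_add_dsum[OF Aadd Dadd])
    show "lhom L D' (Ws (Suc (Suc i))) (\<lambda>z. g (Suc i) (pfst z))"
      unfolding D'_def by (rule lhom_comp[OF lhom_pfst gsl])
    show "(\<lambda>z. g (Suc i) (pfst z)) ` carrier D' = g (Suc i) ` carrier (Ws (Suc i))"
    proof (intro equalityI subsetI)
      fix y assume "y \<in> (\<lambda>z. g (Suc i) (pfst z)) ` carrier D'"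
      then show "y \<in> g (Suc i) ` carrier (Ws (Suc i))" by (auto simp: D'_def A_def)
    next
      fix y assume "y \<in> g (Suc i) ` carrier (Ws (Suc i))"
      then obtain a where a: "a \<in> carrier A" "y = g (Suc i) a" by (auto simp: A_def)
      have "psum a \<zero>\<^bsub>D\<^esub> \<in> carrier D'" using a by (simp add: D'_def)
      then show "y \<in> (\<lambda>z. g (Suc i) (pfst z)) ` carrier D'" using a by force
    qed
    show "U' \<subseteq> carrier D'" by (rule U'D)
    show SU': "d ` carrier D \<subseteq> U'" using lhom_closed[OF el] by (auto simp: U'_def d_def)
    show "\<forall>z\<in>U'. g (Suc i) (pfst z) = \<zero>\<^bsub>Ws (Suc (Suc i))\<^esub>"
    proof
      fix z assume "z \<in> U'"
      then have "pfst z \<in> g i ` carrier (Ws i)" by (simp add: U'_def himg)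
      then show "g (Suc i) (pfst z) = \<zero>\<^bsub>Ws (Suc (Suc i))\<^esub>" using cx_gg[OF i] by auto
    qed
    show "ext_ok L W D' U'"
      unfolding D'_def U'_def by (rule ext_sum[OF extA hD_A z_hD Al Dl])
    show "ext_ok L W D' (d ` carrier D)"
      unfolding D'_def d_def using ext_img[OF Dl Al extA hl el] key by (simp add: D'_def)
    assume "Suc i = 1 \<or> good (Suc i - 1)"
    then have gi: "good i" using i by simp
    have al: "lhom L (A\<lparr>carrier := h ` carrier D\<rparr>) D' (fac D h k)" by (rule fa(1))
    have pl: "lhom L (D'\<lparr>carrier := U'\<rparr>) (A\<lparr>carrier := h ` carrier D\<rparr>) pfst"
      by (auto simp: lhom_def U'_def D'_def)
    have ql: "lhom L (D'\<lparr>carrier := U'\<rparr>) D psnd"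
      by (auto simp: lhom_def U'_def D'_def)
    show "lhom L (D'\<lparr>carrier := U'\<rparr>) D' r'"
      unfolding r'_def by (rule lhom_plus[OF lhom_comp[OF pl al] lhom_comp[OF ql dl] D'l])
    have dadd: "d a \<oplus>\<^bsub>D'\<^esub> d b = d (a \<oplus>\<^bsub>D\<^esub> b)" if "a \<in> carrier D" "b \<in> carrier D" for a b
      using lhom_add[OF dl that] by simp
    show "r' ` U' \<subseteq> d ` carrier D"
    proof
      fix y assume "y \<in> r' ` U'"
      then obtain x where x: "x \<in> U'" "y = r' x" by auto
      then obtain u where u: "u \<in> carrier D" "pfst x = h u" by (auto simp: U'_def)
      have xs: "psnd x \<in> carrier D" using x by (simp add: U'_def)
      have m: "u \<ominus>\<^bsub>D\<^esub> e u \<in> carrier D" using u lhom_closed[OF el] by simp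
      have "y = d (u \<ominus>\<^bsub>D\<^esub> e u) \<oplus>\<^bsub>D'\<^esub> d (psnd x)"
        using x u fa(2) by (simp add: r'_def k_def)
      also have "\<dots> = d ((u \<ominus>\<^bsub>D\<^esub> e u) \<oplus>\<^bsub>D\<^esub> psnd x)" using dadd m xs by simp
      finally show "y \<in> d ` carrier D" using m xs by auto
    qed
    show "\<forall>s\<in>d ` carrier D. r' s = s"
    proof
      fix s assume "s \<in> d ` carrier D"
      then obtain z where z: "z \<in> carrier D" "s = d z" by auto
      have ez: "e z \<in> carrier D" by (rule lhom_closed[OF el z(1)])
      have m: "z \<ominus>\<^bsub>D\<^esub> e z \<in> carrier D" using z ez by simp
      have "r' s = k z \<oplus>\<^bsub>D'\<^esub> d (e z)" using z fa(2) by (simp add: r'_def d_def)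
      also have "\<dots> = d ((z \<ominus>\<^bsub>D\<^esub> e z) \<oplus>\<^bsub>D\<^esub> e z)" unfolding k_def using dadd m ez by simp
      also have "(z \<ominus>\<^bsub>D\<^esub> e z) \<oplus>\<^bsub>D\<^esub> e z = z" using z(1) ez by (rule DG.ag_minus_plus)
      finally show "r' s = s" using z by simp
    qed
  next
    assume gs: "good (Suc i)"
    have ex: "exact_at M f1 Ws g (Suc i)" using good_ex[OF gs] by simp
    then have kerA: "{x \<in> carrier A. g (Suc i) x = \<zero>\<^bsub>Ws (Suc (Suc i))\<^esub>} = h ` carrier D"
      using i by (simp add: exact_at_def in_image_def himg A_def)
    show "{z \<in> carrier D'. g (Suc i) (pfst z) = \<zero>\<^bsub>Ws (Suc (Suc i))\<^esub>} = U'"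
    proof (intro equalityI subsetI)
      fix z assume "z \<in> {z \<in> carrier D'. g (Suc i) (pfst z) = \<zero>\<^bsub>Ws (Suc (Suc i))\<^esub>}"
      then show "z \<in> U'" using kerA by (auto simp: D'_def U'_def)
    next
      fix z assume z: "z \<in> U'"
      then have "pfst z \<in> {x \<in> carrier A. g (Suc i) x = \<zero>\<^bsub>Ws (Suc (Suc i))\<^esub>}"
        using kerA by (simp add: U'_def)
      then show "z \<in> {z \<in> carrier D'. g (Suc i) (pfst z) = \<zero>\<^bsub>Ws (Suc (Suc i))\<^esub>}"
        using z U'D by auto
    qed
  qed
  then show "INV (Suc i) (dsum (Ws (Suc i)) D) (\<lambda>z. g (Suc i) (pfst z))
           {x. pfst x \<in> h ` carrier D \<and> psnd x \<in> carrier D}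
           (\<lambda>x. fac D h (\<lambda>u. d (u \<ominus>\<^bsub>D\<^esub> e u)) (pfst x) \<oplus>\<^bsub>dsum (Ws (Suc i)) D\<^esub> d (psnd x))
           (d ` carrier D)"
    unfolding r'_def k_def U'_def D'_def A_def
    by (simp add: k_def[abs_def])
qed

end

context cx
begin

lemma st_INV: "case st k of (D, h, U, r, S) \<Rightarrow> INV (Suc k) D h U r S"
proof (induction k)
  case 0
  show ?case using INV_base by simp
next
  case (Suc k)
  obtain D h U r S where e: "st k = (D, h, U, r, S)" by (rule prod_cases5)
  have I: "INV (Suc k) D h U r S" using Suc e by simp
  have "INV (Suc (Suc k)) (dsum (Ws (Suc (Suc k))) D) (\<lambda>z. g (Suc (Suc k)) (pfst z))
           {x. pfst x \<in> h ` carrier D \<and> psnd x \<in> carrier D}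
           (\<lambda>x. fac D h (\<lambda>u. psum (h (u \<ominus>\<^bsub>D\<^esub> ee (Suc k) D U r u)) (ee (Suc k) D U r (u \<ominus>\<^bsub>D\<^esub> ee (Suc k) D U r u))) (pfst x)
              \<oplus>\<^bsub>dsum (Ws (Suc (Suc k))) D\<^esub> psum (h (psnd x)) (ee (Suc k) D U r (psnd x)))
           ((\<lambda>z. psum (h z) (ee (Suc k) D U r z)) ` carrier D)"
    using step(4)[of "Suc k" D h U r S] I by simp
  then show ?case by (simp add: e nxt_eq)
qed

definition stD :: "nat \<Rightarrow> ('a, 'w) umod" where "stD k = fst (st k)"
definition stS :: "nat \<Rightarrow> (nat \<Rightarrow> 'w) set" where "stS k = snd (snd (snd (snd (st k))))"

lemma st_props:
  shows "in_add L W (stD k)"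
    and "ext_ok L W (stD k) (stS k)"
    and "stS k \<subseteq> carrier (stD k)"
    and "lhom L (stD k) (stD (Suc k)) (dmap (Suc k) (st k))"
    and "\<forall>s\<in>stS k. dmap (Suc k) (st k) s = \<zero>\<^bsub>stD (Suc k)\<^esub>"
    and "good (Suc k) \<Longrightarrow> {z \<in> carrier (stD k). dmap (Suc k) (st k) z = \<zero>\<^bsub>stD (Suc k)\<^esub>} = stS k"
    and "stS (Suc k) = dmap (Suc k) (st k) ` carrier (stD k)"
proof -
  obtain D h U r S where e: "st k = (D, h, U, r, S)" by (rule prod_cases5)
  have I: "INV (Suc k) D h U r S" using st_INV[of k] e by simp
  have sD: "stD k = D" "stS k = S" by (simp_all add: stD_def stS_def e)
  have sD': "stD (Suc k) = dsum (Ws (Suc (Suc k))) D" by (simp add: stD_def e nxt_eq)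
  have dm: "dmap (Suc k) (st k) = (\<lambda>z. psum (h z) (ee (Suc k) D U r z))" by (simp add: dmap_def e)
  have S': "stS (Suc k) = (\<lambda>z. psum (h z) (ee (Suc k) D U r z)) ` carrier D" by (simp add: stS_def e nxt_eq)
  note st = step[of "Suc k" D h U r S, OF _ I]
  have IP: "in_add L W D" "ext_ok L W D S" "S \<subseteq> U" "U \<subseteq> carrier D"
    using I unfolding INV_def by blast+
  show "in_add L W (stD k)" using IP by (simp only: sD)
  show "ext_ok L W (stD k) (stS k)" using IP by (simp only: sD)
  show "stS k \<subseteq> carrier (stD k)" using IP by (simp only: sD)
  show "lhom L (stD k) (stD (Suc k)) (dmap (Suc k) (st k))" using st(1) by (simp add: sD sD' dm)
  show "\<forall>s\<in>stS k. dmap (Suc k) (st k) s = \<zero>\<^bsub>stD (Suc k)\<^esub>" using st(2) by (simp add: sD sD' dm)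
  show "good (Suc k) \<Longrightarrow> {z \<in> carrier (stD k). dmap (Suc k) (st k) z = \<zero>\<^bsub>stD (Suc k)\<^esub>} = stS k"
    using st(3) by (simp add: sD sD' dm)
  show "stS (Suc k) = dmap (Suc k) (st k) ` carrier (stD k)" by (simp add: S' sD dm)
qed

lemma st0: "stD 0 = Ws 1" "stS 0 = f1 ` N1" by (simp_all add: stD_def stS_def)

definition Ws' :: "nat \<Rightarrow> ('a, 'w) umod" where "Ws' i = stD (i - 1)"
definition g' :: "nat \<Rightarrow> (nat \<Rightarrow> 'w) \<Rightarrow> (nat \<Rightarrow> 'w)" where "g' i = dmap i (st (i - 1))"

lemma new_complex: "app_complex L W (M\<lparr>carrier := N1\<rparr>) f1 Ws' g'"
  unfolding app_complex_def
proof (intro conjI allI impI ballI)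
  show "lhom L (M\<lparr>carrier := N1\<rparr>) (Ws' 1) f1"
    using lhom_restrict[OF f1_hom N1_sub] by (simp add: Ws'_def st0)
  fix i :: nat assume i: "1 \<le> i"
  then obtain k where k: "i = Suc k" by (cases i) auto
  show "in_add L W (Ws' i)" using st_props(1)[of k] by (simp add: Ws'_def k)
  show "lhom L (Ws' i) (Ws' (Suc i)) (g' i)" using st_props(4)[of k] by (simp add: Ws'_def g'_def k)
  show "left_approx L W (Ws' (Suc i)\<lparr>carrier := g' i ` carrier (Ws' i)\<rparr>) (Ws' (Suc i)) id"
    unfolding left_approx_iff using st_props(1,2,3)[of "Suc k"] st_props(7)[of k]
    by (simp add: Ws'_def g'_def k)
next
  fix z assume "z \<in> carrier (M\<lparr>carrier := N1\<rparr>)"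
  then have "f1 z \<in> stS 0" by (simp add: st0)
  then show "g' 1 (f1 z) = \<zero>\<^bsub>Ws' 2\<^esub>" using st_props(5)[of 0] by (simp add: Ws'_def g'_def numeral_2_eq_2)
next
  fix i :: nat and x assume i: "1 \<le> i" and x: "x \<in> carrier (Ws' i)"
  then obtain k where k: "i = Suc k" by (cases i) auto
  have "g' i x \<in> stS (Suc k)" using x st_props(7)[of k] by (simp add: Ws'_def g'_def k)
  then show "g' (Suc i) (g' i x) = \<zero>\<^bsub>Ws' (Suc (Suc i))\<^esub>"
    using st_props(5)[of "Suc k"] by (simp add: Ws'_def g'_def k)
next
  show "left_approx L W (Ws' 1\<lparr>carrier := f1 ` carrier (M\<lparr>carrier := N1\<rparr>)\<rparr>) (Ws' 1) id"
    unfolding left_approx_iff using st_props(1,2,3)[of 0] by (simp add: Ws'_def st0)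
qed

lemma new_exact: "good i \<Longrightarrow> 1 \<le> i \<Longrightarrow> exact_at (M\<lparr>carrier := N1\<rparr>) f1 Ws' g' i"
proof -
  assume gi: "good i" and i: "1 \<le> i"
  then obtain k where k: "i = Suc k" by (cases i) auto
  have "{z \<in> carrier (stD k). dmap (Suc k) (st k) z = \<zero>\<^bsub>stD (Suc k)\<^esub>} = stS k"
    using st_props(6)[of k] gi k by simp
  moreover have "in_image (M\<lparr>carrier := N1\<rparr>) f1 Ws' g' i = stS k"
  proof (cases k)
    case 0 then show ?thesis by (simp add: in_image_def k st0)
  next
    case (Suc j) then show ?thesis using st_props(7)[of j] by (simp add: in_image_def k Ws'_def g'_def)
  qed
  ultimately show ?thesis by (simp add: exact_at_def Ws'_def g'_def k)
qed

lemma new_inj: "inj_on f1 (carrier (M\<lparr>carrier := N1\<rparr>))"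
  using inj N1_sub by (simp add: inj_on_subset)

end

lemma transfer:
  assumes M: "left_module L M" and N1: "left_submodule L M N1" and N2: "left_submodule L M N2"
    and disj: "N1 \<inter> N2 = {\<zero>\<^bsub>M\<^esub>}" and dec: "carrier M = {x \<oplus>\<^bsub>M\<^esub> y | x y. x \<in> N1 \<and> y \<in> N2}"
    and cxa: "app_complex L W M f1 Ws g" and inj: "inj_on f1 (carrier M)"
    and gm: "\<And>i. good (Suc i) \<Longrightarrow> good i"
    and ge: "\<And>i. good i \<Longrightarrow> 1 \<le> i \<Longrightarrow> exact_at M f1 Ws g i"
  shows "\<exists>Ws' g'. app_complex L W (M\<lparr>carrier := N1\<rparr>) f1 Ws' g' \<and> inj_on f1 (carrier (M\<lparr>carrier := N1\<rparr>)) \<and>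
     (\<forall>i. good i \<longrightarrow> 1 \<le> i \<longrightarrow> exact_at (M\<lparr>carrier := N1\<rparr>) f1 Ws' g' i)"
proof -
  interpret C: cx L W M N1 N2 f1 Ws g good
    by (rule cx.intro[OF M N1 N2 disj dec cxa inj gm ge])
  show ?thesis
    by (intro exI[of _ C.Ws'] exI[of _ C.g'] conjI allI impI C.new_complex C.new_inj C.new_exact)
qed

theorem lemma2p1:
  fixes R :: "'r ring" and L :: "'a ring" and phi :: "'r \<Rightarrow> 'a"
    and W :: "('a, 'w) module" and M :: "('a, 'm) module" and N1 N2 :: "'m set"
  assumes "artin_algebra R L phi"
    and "left_module L W" and "fin_gen L W"
    and "left_module L M" and "fin_gen L M"
    and "left_submodule L M N1" and "left_submodule L M N2"
    and "N1 \<inter> N2 = {\<zero>\<^bsub>M\<^esub>}"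
    and "carrier M = {x \<oplus>\<^bsub>M\<^esub> y | x y. x \<in> N1 \<and> y \<in> N2}"
  shows "lapp L W (M\<lparr>carrier := N1\<rparr>) \<ge> lapp L W M"
proof -
  note T = transfer[OF assms(4) assms(6) assms(7) assms(8) assms(9)]
  let ?M1 = "M\<lparr>carrier := N1\<rparr>"
  let ?EM = "\<exists>f1 Ws g. app_complex L W M f1 Ws g \<and> exact_everywhere M f1 Ws g"
  let ?EM1 = "\<exists>f1 Ws g. app_complex L W ?M1 f1 Ws g \<and> exact_everywhere ?M1 f1 Ws g"
  have ev: "?EM1" if em: "?EM"
  proof -
    obtain f1 Ws g where c: "app_complex L W M f1 Ws g" "exact_everywhere M f1 Ws g" using em by blast
    have inj: "inj_on f1 (carrier M)" and ex: "\<And>i. 1 \<le> i \<Longrightarrow> exact_at M f1 Ws g i"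
      using c(2) by (auto simp: exact_everywhere_def)
    obtain Ws' g' where n: "app_complex L W ?M1 f1 Ws' g'" "inj_on f1 (carrier ?M1)"
      "\<forall>i. True \<longrightarrow> 1 \<le> i \<longrightarrow> exact_at ?M1 f1 Ws' g' i"
      using T[OF c(1) inj, of "\<lambda>_. True"] ex by blast
    have "exact_everywhere ?M1 f1 Ws' g'" using n(2,3) by (simp add: exact_everywhere_def)
    then show ?thesis using n(1) by blast
  qed
  define SM where "SM = {m. m \<ge> 1 \<and> (\<exists>f1 Ws g. app_complex L W M f1 Ws g \<and> exact_upto M f1 Ws g m)}"
  define SM1 where "SM1 = {m. m \<ge> 1 \<and> (\<exists>f1 Ws g. app_complex L W ?M1 f1 Ws g \<and> exact_upto ?M1 f1 Ws g m)}"
  have sub: "SM \<subseteq> SM1"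
  proof
    fix m assume "m \<in> SM"
    then obtain f1 Ws g where m1: "m \<ge> 1" and c: "app_complex L W M f1 Ws g" "exact_upto M f1 Ws g m"
      unfolding SM_def by blast
    have inj: "inj_on f1 (carrier M)" and ex: "\<And>i. 1 \<le> i \<Longrightarrow> i < m \<Longrightarrow> exact_at M f1 Ws g i"
      using c(2) by (auto simp: exact_upto_def)
    obtain Ws' g' where n: "app_complex L W ?M1 f1 Ws' g'" "inj_on f1 (carrier ?M1)"
      "\<forall>i. i < m \<longrightarrow> 1 \<le> i \<longrightarrow> exact_at ?M1 f1 Ws' g' i"
      using T[OF c(1) inj, of "\<lambda>i. i < m"] ex by fastforce
    have "exact_upto ?M1 f1 Ws' g' m" using n(2,3) by (simp add: exact_upto_def)
    then show "m \<in> SM1" using n(1) m1 unfolding SM1_def by blast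
  qed
  show ?thesis
  proof (cases ?EM1)
    case True
    then show ?thesis by (simp add: lapp_def)
  next
    case False
    then have nEM: "\<not> ?EM" using ev by blast
    have "lapp L W M = Sup (enat ` SM)" unfolding lapp_def SM_def by (rule if_not_P[OF nEM])
    also have "\<dots> \<le> Sup (enat ` SM1)" by (rule Sup_subset_mono[OF image_mono[OF sub]])
    also have "\<dots> = lapp L W ?M1" unfolding lapp_def SM1_def by (rule sym, rule if_not_P[OF False])
    finally show ?thesis .
  qed
qed

end
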